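(* Let $\mathcal{F}$ be a family of finite graded vertically indecomposable lattices (considered up to isomorphism) that is closed under vertical 2-sum. Let $f_{\mathrm{vi}}(n)$ and $f_{\mathrm{pc}}(n)$ be the numbers of $n$-element lattices in $\mathcal{F}$ and of $n$-element pieces in $\mathcal{F}$, respectively. Let $N \ge 6$ be an integer constant, and let $\underline{f} \colon \mathbb{N}^+ \to \mathbb{N}^+$ be defined by $\underline{f}(n) = f_{\mathrm{pc}}(n)$ for $1 \le n \le 6$, \[ \underline{f}(n) = f_{\mathrm{pc}}(n) + \sum_{k=6}^{n-1} f_{\mathrm{pc}}(k)\, \underline{f}(n-k+4) \quad \text{for } 7 \le n \le N, \] and \[ \underline{f}(n) = \sum_{k=6}^{N} f_{\mathrm{pc}}(k)\, \underline{f}(n-k+4) \quad \text{for } n \ge N+1. \] Then $f_{\mathrm{vi}}(n) \ge \underline{f}(n)$ for all $n \ge 1$.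
   Context: A knot of a lattice $X$ is an element distinct from top and bottom that is comparable to all elements; a lattice is vertically indecomposable if it has no knot. For a lattice $L$ with exactly two coatoms and a lattice $U$ with exactly two atoms, a vertical 2-sum $L +_2 U$ is the poset obtained by removing the top of $L$ and the bottom of $U$ and identifying the two coatoms of $L$ with the two atoms of $U$ via some bijection (with order generated by the orders of the two parts); it is a lattice with $|L|+|U|-4$ elements. "Closed under vertical 2-sum" means every vertical 2-sum of members of $\mathcal{F}$ (where defined) lies in $\mathcal{F}$. In a graded lattice $X$, two elements form a neck if (1) they have the same rank, (2) they are the only elements of $X$ of that rank, and (3) they are neither atoms nor coatoms. A piece is a graded vertically indecomposable lattice that has exactly two atoms, exactly two coatoms, no neck, and rank at least three. *)

theory Defs
  imports Main
begin

definition is_lattice :: "'a set \<Rightarrow> ('a \<Rightarrow> 'a \<Rightarrow> bool) \<Rightarrow> bool" where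
  "is_lattice A le \<longleftrightarrow> A \<noteq> {}
     \<and> (\<forall>x\<in>A. le x x)
     \<and> (\<forall>x\<in>A. \<forall>y\<in>A. le x y \<and> le y x \<longrightarrow> x = y)
     \<and> (\<forall>x\<in>A. \<forall>y\<in>A. \<forall>z\<in>A. le x y \<and> le y z \<longrightarrow> le x z)
     \<and> (\<forall>x\<in>A. \<forall>y\<in>A.
          (\<exists>s\<in>A. le x s \<and> le y s \<and> (\<forall>z\<in>A. le x z \<and> le y z \<longrightarrow> le s z))
        \<and> (\<exists>i\<in>A. le i x \<and> le i y \<and> (\<forall>z\<in>A. le z x \<and> le z y \<longrightarrow> le z i)))"

definition ptop :: "'a set \<Rightarrow> ('a \<Rightarrow> 'a \<Rightarrow> bool) \<Rightarrow> 'a" where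
  "ptop A le = (THE t. t \<in> A \<and> (\<forall>x\<in>A. le x t))"

definition pbot :: "'a set \<Rightarrow> ('a \<Rightarrow> 'a \<Rightarrow> bool) \<Rightarrow> 'a" where
  "pbot A le = (THE b. b \<in> A \<and> (\<forall>x\<in>A. le b x))"

definition covers :: "'a set \<Rightarrow> ('a \<Rightarrow> 'a \<Rightarrow> bool) \<Rightarrow> 'a \<Rightarrow> 'a \<Rightarrow> bool" where
  "covers A le x y \<longleftrightarrow> x \<in> A \<and> y \<in> A \<and> le x y \<and> x \<noteq> y
     \<and> (\<forall>z\<in>A. le x z \<and> le z y \<longrightarrow> z = x \<or> z = y)"

definition atoms :: "'a set \<Rightarrow> ('a \<Rightarrow> 'a \<Rightarrow> bool) \<Rightarrow> 'a set" where
  "atoms A le = {a. covers A le (pbot A le) a}"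

definition coatoms :: "'a set \<Rightarrow> ('a \<Rightarrow> 'a \<Rightarrow> bool) \<Rightarrow> 'a set" where
  "coatoms A le = {c. covers A le c (ptop A le)}"

definition rank_fun :: "'a set \<Rightarrow> ('a \<Rightarrow> 'a \<Rightarrow> bool) \<Rightarrow> ('a \<Rightarrow> nat) \<Rightarrow> bool" where
  "rank_fun A le \<rho> \<longleftrightarrow> \<rho> (pbot A le) = 0 \<and> (\<forall>x y. covers A le x y \<longrightarrow> \<rho> y = \<rho> x + 1)"

definition graded :: "'a set \<Rightarrow> ('a \<Rightarrow> 'a \<Rightarrow> bool) \<Rightarrow> bool" where
  "graded A le \<longleftrightarrow> (\<exists>\<rho>. rank_fun A le \<rho>)"

definition knot :: "'a set \<Rightarrow> ('a \<Rightarrow> 'a \<Rightarrow> bool) \<Rightarrow> 'a \<Rightarrow> bool" where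
  "knot A le x \<longleftrightarrow> x \<in> A \<and> x \<noteq> ptop A le \<and> x \<noteq> pbot A le \<and> (\<forall>y\<in>A. le x y \<or> le y x)"

definition vert_indec :: "'a set \<Rightarrow> ('a \<Rightarrow> 'a \<Rightarrow> bool) \<Rightarrow> bool" where
  "vert_indec A le \<longleftrightarrow> \<not> (\<exists>x. knot A le x)"

definition is_neck :: "'a set \<Rightarrow> ('a \<Rightarrow> 'a \<Rightarrow> bool) \<Rightarrow> ('a \<Rightarrow> nat) \<Rightarrow> 'a \<Rightarrow> 'a \<Rightarrow> bool" where
  "is_neck A le \<rho> a b \<longleftrightarrow> a \<in> A \<and> b \<in> A \<and> a \<noteq> b \<and> \<rho> a = \<rho> b
     \<and> {x\<in>A. \<rho> x = \<rho> a} = {a, b}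
     \<and> a \<notin> atoms A le \<and> a \<notin> coatoms A le \<and> b \<notin> atoms A le \<and> b \<notin> coatoms A le"

definition is_piece :: "'a set \<Rightarrow> ('a \<Rightarrow> 'a \<Rightarrow> bool) \<Rightarrow> bool" where
  "is_piece A le \<longleftrightarrow> is_lattice A le \<and> graded A le \<and> vert_indec A le
     \<and> card (atoms A le) = 2 \<and> card (coatoms A le) = 2
     \<and> (\<exists>\<rho>. rank_fun A le \<rho> \<and> \<rho> (ptop A le) \<ge> 3 \<and> \<not> (\<exists>a b. is_neck A le \<rho> a b))"

definition iso :: "'a set \<Rightarrow> ('a \<Rightarrow> 'a \<Rightarrow> bool) \<Rightarrow> 'b set \<Rightarrow> ('b \<Rightarrow> 'b \<Rightarrow> bool) \<Rightarrow> bool" where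
  "iso A le B le' \<longleftrightarrow> (\<exists>h. bij_betw h A B \<and> (\<forall>x\<in>A. \<forall>y\<in>A. le x y \<longleftrightarrow> le' (h x) (h y)))"

text \<open>Vertical 2-sum L +_2 U with identification \<phi> : coatoms L \<rightarrow> atoms U (a bijection).
  Elements of L minus its top are tagged Inl; elements of U minus its bottom and atoms are tagged Inr;
  an atom u of U is identified with the coatom (inverse of \<phi>) u of L.\<close>
definition vsum2 :: "'a set \<Rightarrow> ('a \<Rightarrow> 'a \<Rightarrow> bool) \<Rightarrow> 'a set \<Rightarrow> ('a \<Rightarrow> 'a \<Rightarrow> bool) \<Rightarrow> ('a \<Rightarrow> 'a)
     \<Rightarrow> ('a + 'a) set \<times> (('a + 'a) \<Rightarrow> ('a + 'a) \<Rightarrow> bool)" where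
  "vsum2 A le B le' \<phi> =
    (let g = (\<lambda>u. if u \<in> atoms B le' then Inl (inv_into (coatoms A le) \<phi> u) else Inr u);
         R1 = (\<lambda>x y. \<exists>a b. a \<in> A - {ptop A le} \<and> b \<in> A - {ptop A le} \<and> x = Inl a \<and> y = Inl b \<and> le a b);
         R2 = (\<lambda>x y. \<exists>u v. u \<in> B - {pbot B le'} \<and> v \<in> B - {pbot B le'} \<and> x = g u \<and> y = g v \<and> le' u v)
     in (Inl ` (A - {ptop A le}) \<union> Inr ` (B - {pbot B le'} - atoms B le'),
         tranclp (\<lambda>x y. R1 x y \<or> R2 x y)))"

definition closed_vsum2 :: "(nat set \<times> (nat \<Rightarrow> nat \<Rightarrow> bool)) set \<Rightarrow> bool" where
  "closed_vsum2 F \<longleftrightarrow> (\<forall>A le B le' \<phi>. (A, le) \<in> F \<longrightarrow> (B, le') \<in> F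
      \<longrightarrow> card (coatoms A le) = 2 \<longrightarrow> card (atoms B le') = 2
      \<longrightarrow> bij_betw \<phi> (coatoms A le) (atoms B le')
      \<longrightarrow> (\<exists>C lc. (C, lc) \<in> F \<and> iso C lc (fst (vsum2 A le B le' \<phi>)) (snd (vsum2 A le B le' \<phi>))))"

definition num_classes :: "('a set \<times> ('a \<Rightarrow> 'a \<Rightarrow> bool)) set \<Rightarrow> nat" where
  "num_classes S = card ((\<lambda>(A, le). {(B, le'). (B, le') \<in> S \<and> iso B le' A le}) ` S)"

definition f_vi :: "(nat set \<times> (nat \<Rightarrow> nat \<Rightarrow> bool)) set \<Rightarrow> nat \<Rightarrow> nat" where
  "f_vi F n = num_classes {(A, le). (A, le) \<in> F \<and> card A = n}"

definition f_pc :: "(nat set \<times> (nat \<Rightarrow> nat \<Rightarrow> bool)) set \<Rightarrow> nat \<Rightarrow> nat" where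
  "f_pc F n = num_classes {(A, le). (A, le) \<in> F \<and> card A = n \<and> is_piece A le}"

function lowf :: "(nat \<Rightarrow> nat) \<Rightarrow> nat \<Rightarrow> nat \<Rightarrow> nat" where
  "lowf p N n =
    (if n \<le> 6 then p n
     else if n \<le> N then p n + (\<Sum>k = 6..n - 1. p k * lowf p N (n - k + 4))
     else (\<Sum>k = 6..N. p k * lowf p N (n - k + 4)))"
  by pat_completeness auto
termination
  by (relation "measure (\<lambda>(p, N, n). n)") auto

end

theory Submission
  imports Defs
begin

definition po :: "'a set \<Rightarrow> ('a \<Rightarrow> 'a \<Rightarrow> bool) \<Rightarrow> bool" where
  "po A le \<longleftrightarrow> (\<forall>x\<in>A. le x x) \<and> (\<forall>x\<in>A. \<forall>y\<in>A. le x y \<and> le y x \<longrightarrow> x = y)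
     \<and> (\<forall>x\<in>A. \<forall>y\<in>A. \<forall>z\<in>A. le x y \<and> le y z \<longrightarrow> le x z)"

lemma po_refl: "po A le \<Longrightarrow> x \<in> A \<Longrightarrow> le x x" unfolding po_def by blast
lemma po_antisym: "po A le \<Longrightarrow> x \<in> A \<Longrightarrow> y \<in> A \<Longrightarrow> le x y \<Longrightarrow> le y x \<Longrightarrow> x = y"
  unfolding po_def by blast
lemma po_trans: "po A le \<Longrightarrow> x \<in> A \<Longrightarrow> y \<in> A \<Longrightarrow> z \<in> A \<Longrightarrow> le x y \<Longrightarrow> le y z \<Longrightarrow> le x z"
  unfolding po_def by blast

lemma lattice_po: "is_lattice A le \<Longrightarrow> po A le"
  unfolding is_lattice_def po_def by (elim conjE) (intro conjI; assumption)

lemma lattice_ops: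
  assumes "is_lattice A le"
  shows "\<forall>x\<in>A. \<forall>y\<in>A.
          (\<exists>s\<in>A. le x s \<and> le y s \<and> (\<forall>z\<in>A. le x z \<and> le y z \<longrightarrow> le s z))
        \<and> (\<exists>i\<in>A. le i x \<and> le i y \<and> (\<forall>z\<in>A. le z x \<and> le z y \<longrightarrow> le z i))"
  using assms unfolding is_lattice_def by (elim conjE)

lemma lattice_ne: "is_lattice A le \<Longrightarrow> A \<noteq> {}"
  unfolding is_lattice_def by (elim conjE)

lemma lattice_join: "is_lattice A le \<Longrightarrow> x \<in> A \<Longrightarrow> y \<in> A \<Longrightarrow> \<exists>s\<in>A. le x s \<and> le y s"
  using lattice_ops[of A le] by blast

lemma lattice_meet: "is_lattice A le \<Longrightarrow> x \<in> A \<Longrightarrow> y \<in> A \<Longrightarrow> \<exists>s\<in>A. le s x \<and> le s y"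
  using lattice_ops[of A le] by blast

lemma fin_max:
  assumes "finite T" "T \<noteq> {}" "T \<subseteq> A" "po A le"
  shows "\<exists>m\<in>T. \<forall>t\<in>T. le m t \<longrightarrow> t = m"
  using assms
proof (induction T rule: finite_ne_induct)
  case (singleton x) then show ?case by auto
next
  case (insert x T)
  have po: "po A le" and xA: "x \<in> A" and TA: "T \<subseteq> A" using insert.prems by auto
  obtain m where m: "m \<in> T" "\<forall>t\<in>T. le m t \<longrightarrow> t = m" using insert.IH TA po by auto
  have mA: "m \<in> A" using m TA by auto
  show ?case
  proof (cases "le m x")
    case True
    have "\<forall>t\<in>insert x T. le x t \<longrightarrow> t = x"
    proof (intro ballI impI)
      fix t assume t: "t \<in> insert x T" and xt: "le x t"
      show "t = x"
      proof (cases "t = x")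
        case False
        then have tT: "t \<in> T" using t by auto
        have "le m t" using po_trans[OF po mA xA, of t] True xt tT TA by auto
        then have "t = m" using m tT by auto
        then show ?thesis using po_antisym[OF po xA mA] True xt by auto
      qed
    qed
    then show ?thesis by auto
  next
    case False
    then show ?thesis using m by auto
  qed
qed

lemma fin_min:
  assumes "finite T" "T \<noteq> {}" "T \<subseteq> A" "po A le"
  shows "\<exists>m\<in>T. \<forall>t\<in>T. le t m \<longrightarrow> t = m"
proof -
  have "po A (\<lambda>x y. le y x)" using assms(4) unfolding po_def by blast
  from fin_max[OF assms(1-3) this] show ?thesis .
qed

lemma lattice_top:
  assumes "finite A" "is_lattice A le"
  shows "\<exists>t\<in>A. \<forall>x\<in>A. le x t"
proof -
  have po: "po A le" using lattice_po assms by blast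
  have ne: "A \<noteq> {}" using assms lattice_ne by blast
  obtain m where m: "m \<in> A" "\<forall>t\<in>A. le m t \<longrightarrow> t = m" using fin_max[OF assms(1) ne _ po] by auto
  have "\<forall>x\<in>A. le x m"
  proof
    fix x assume x: "x \<in> A"
    obtain s where s: "s \<in> A" "le x s" "le m s" using lattice_join[OF assms(2) x m(1)] by blast
    then show "le x m" using m by auto
  qed
  then show ?thesis using m by auto
qed

lemma lattice_bot:
  assumes "finite A" "is_lattice A le"
  shows "\<exists>t\<in>A. \<forall>x\<in>A. le t x"
proof -
  have po: "po A le" using lattice_po assms by blast
  have ne: "A \<noteq> {}" using assms lattice_ne by blast
  obtain m where m: "m \<in> A" "\<forall>t\<in>A. le t m \<longrightarrow> t = m" using fin_min[OF assms(1) ne _ po] by auto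
  have "\<forall>x\<in>A. le m x"
  proof
    fix x assume x: "x \<in> A"
    obtain s where s: "s \<in> A" "le s x" "le s m" using lattice_meet[OF assms(2) x m(1)] by blast
    then show "le m x" using m by auto
  qed
  then show ?thesis using m by auto
qed

lemma ptop_eq: assumes "po A le" "t \<in> A" "\<forall>x\<in>A. le x t" shows "ptop A le = t"
  unfolding ptop_def
proof (rule the_equality)
  show "t \<in> A \<and> (\<forall>x\<in>A. le x t)" using assms by blast
  fix s assume "s \<in> A \<and> (\<forall>x\<in>A. le x s)"
  then show "s = t" using po_antisym[OF assms(1), of s t] assms by blast
qed

lemma pbot_eq: assumes "po A le" "t \<in> A" "\<forall>x\<in>A. le t x" shows "pbot A le = t"
  unfolding pbot_def
proof (rule the_equality)
  show "t \<in> A \<and> (\<forall>x\<in>A. le t x)" using assms by blast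
  fix s assume "s \<in> A \<and> (\<forall>x\<in>A. le s x)"
  then show "s = t" using po_antisym[OF assms(1), of s t] assms by blast
qed

lemma ptop_props: assumes "finite A" "is_lattice A le" shows "ptop A le \<in> A \<and> (\<forall>x\<in>A. le x (ptop A le))"
proof -
  obtain t where "t \<in> A" "\<forall>x\<in>A. le x t" using lattice_top[OF assms] by blast
  moreover then have "ptop A le = t" using ptop_eq[OF lattice_po[OF assms(2)]] by blast
  ultimately show ?thesis by simp
qed

lemma pbot_props: assumes "finite A" "is_lattice A le" shows "pbot A le \<in> A \<and> (\<forall>x\<in>A. le (pbot A le) x)"
proof -
  obtain t where "t \<in> A" "\<forall>x\<in>A. le t x" using lattice_bot[OF assms] by blast
  moreover then have "pbot A le = t" using pbot_eq[OF lattice_po[OF assms(2)]] by blast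
  ultimately show ?thesis by simp
qed

lemma cover_below:
  assumes "finite A" "po A le" "x \<in> A" "y \<in> A" "le x y" "x \<noteq> y"
  shows "\<exists>z\<in>A. covers A le z y \<and> le x z"
proof -
  define T where "T = {z\<in>A. le x z \<and> le z y \<and> z \<noteq> y}"
  have xT: "x \<in> T" using assms po_refl unfolding T_def by fastforce
  have fT: "finite T" "T \<subseteq> A" using assms(1) unfolding T_def by auto
  obtain m where m: "m \<in> T" "\<forall>t\<in>T. le m t \<longrightarrow> t = m"
    using fin_max[OF fT(1) _ fT(2) assms(2)] xT by blast
  have mA: "m \<in> A" "le x m" "le m y" "m \<noteq> y" using m(1) unfolding T_def by auto
  have "covers A le m y"
    unfolding covers_def
  proof (intro conjI ballI impI)
    fix z assume z: "z \<in> A" "le m z \<and> le z y"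
    show "z = m \<or> z = y"
    proof (cases "z = y")
      case False
      have "le x z" using po_trans[OF assms(2) assms(3) mA(1) z(1)] mA z by blast
      then have "z \<in> T" using z False unfolding T_def by blast
      then show ?thesis using m z by blast
    qed simp
  qed (use mA assms(4) in simp_all)
  then show ?thesis using mA by blast
qed

lemma cover_above:
  assumes "finite A" "po A le" "x \<in> A" "y \<in> A" "le x y" "x \<noteq> y"
  shows "\<exists>z\<in>A. covers A le x z \<and> le z y"
proof -
  define T where "T = {z\<in>A. le x z \<and> le z y \<and> z \<noteq> x}"
  have yT: "y \<in> T" using assms po_refl unfolding T_def by fastforce
  have fT: "finite T" "T \<subseteq> A" using assms(1) unfolding T_def by auto
  obtain m where m: "m \<in> T" "\<forall>t\<in>T. le t m \<longrightarrow> t = m"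
    using fin_min[OF fT(1) _ fT(2) assms(2)] yT by blast
  have mA: "m \<in> A" "le x m" "le m y" "m \<noteq> x" using m(1) unfolding T_def by auto
  have "covers A le x m"
    unfolding covers_def
  proof (intro conjI ballI impI)
    fix z assume z: "z \<in> A" "le x z \<and> le z m"
    show "z = x \<or> z = m"
    proof (cases "z = x")
      case False
      have "le z y" using po_trans[OF assms(2) z(1) mA(1) assms(4)] mA z by blast
      then have "z \<in> T" using z False unfolding T_def by blast
      then show ?thesis using m z by blast
    qed simp
  qed (use mA assms(3) in simp_all)
  then show ?thesis using mA by blast
qed

lemma covers_mem: "covers A le x y \<Longrightarrow> x \<in> A \<and> y \<in> A \<and> le x y \<and> x \<noteq> y"
  unfolding covers_def by auto

lemma rank_strict:
  assumes "finite A" "po A le" "rank_fun A le \<rho>"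
  shows "x \<in> A \<Longrightarrow> y \<in> A \<Longrightarrow> le x y \<Longrightarrow> x \<noteq> y \<Longrightarrow> \<rho> x < \<rho> y"
proof (induction "card {w\<in>A. le w y}" arbitrary: y rule: less_induct)
  case less
  obtain z where z: "z \<in> A" "covers A le z y" "le x z" using cover_below[OF assms(1,2) less(2-5)] by auto
  have ry: "\<rho> y = \<rho> z + 1" using assms(3) z unfolding rank_fun_def by auto
  show ?case
  proof (cases "x = z")
    case False
    have sub: "{w\<in>A. le w z} \<subset> {w\<in>A. le w y}"
    proof
      show "{w\<in>A. le w z} \<subseteq> {w\<in>A. le w y}" using po_trans[OF assms(2)] z covers_mem[OF z(2)] by blast
      have "y \<notin> {w\<in>A. le w z}" using po_antisym[OF assms(2)] z covers_mem[OF z(2)] by blast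
      then show "{w\<in>A. le w z} \<noteq> {w\<in>A. le w y}" using less(3) po_refl[OF assms(2)] by blast
    qed
    have "card {w\<in>A. le w z} < card {w\<in>A. le w y}" using psubset_card_mono[OF _ sub] assms(1) by auto
    from less(1)[OF this less(2) z(1) z(3) False] ry show ?thesis by auto
  qed (use ry in auto)
qed

lemma rank_unique:
  assumes "finite A" "po A le" "b \<in> A" "\<forall>x\<in>A. le b x" "rank_fun A le \<rho>" "rank_fun A le \<rho>'"
  shows "x \<in> A \<Longrightarrow> \<rho> x = \<rho>' x"
proof (induction "card {w\<in>A. le w x}" arbitrary: x rule: less_induct)
  case less
  have pb: "pbot A le = b" using pbot_eq[OF assms(2,3,4)] .
  show ?case
  proof (cases "x = b")
    case True
    then show ?thesis using assms(5,6) pb unfolding rank_fun_def by auto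
  next
    case False
    have bx: "le b x" "b \<noteq> x" using assms(4) less(2) False by auto
    obtain z where z: "z \<in> A" "covers A le z x" using cover_below[OF assms(1,2,3) less(2) bx] by blast
    have sub: "{w\<in>A. le w z} \<subset> {w\<in>A. le w x}"
    proof
      show "{w\<in>A. le w z} \<subseteq> {w\<in>A. le w x}" using po_trans[OF assms(2)] z covers_mem[OF z(2)] by blast
      have "x \<notin> {w\<in>A. le w z}" using po_antisym[OF assms(2)] z covers_mem[OF z(2)] by blast
      then show "{w\<in>A. le w z} \<noteq> {w\<in>A. le w x}" using less(2) po_refl[OF assms(2)] by blast
    qed
    have "card {w\<in>A. le w z} < card {w\<in>A. le w x}" using psubset_card_mono[OF _ sub] assms(1) by auto
    from less(1)[OF this z(1)] z assms(5,6) show ?thesis unfolding rank_fun_def by auto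
  qed
qed

definition isoh :: "('a \<Rightarrow> 'b) \<Rightarrow> 'a set \<Rightarrow> ('a \<Rightarrow> 'a \<Rightarrow> bool) \<Rightarrow> 'b set \<Rightarrow> ('b \<Rightarrow> 'b \<Rightarrow> bool) \<Rightarrow> bool" where
  "isoh h A le B le' \<longleftrightarrow> bij_betw h A B \<and> (\<forall>x\<in>A. \<forall>y\<in>A. le x y \<longleftrightarrow> le' (h x) (h y))"

lemma iso_isoh: "iso A le B le' \<longleftrightarrow> (\<exists>h. isoh h A le B le')"
  unfolding iso_def isoh_def by auto

lemma isoh_inv:
  assumes "isoh h A le B le'" shows "isoh (inv_into A h) B le' A le"
proof -
  have b: "bij_betw h A B" and o: "\<forall>x\<in>A. \<forall>y\<in>A. le x y \<longleftrightarrow> le' (h x) (h y)" using assms unfolding isoh_def by auto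
  have b2: "bij_betw (inv_into A h) B A" using bij_betw_inv_into[OF b] .
  have "\<forall>x\<in>B. \<forall>y\<in>B. le' x y \<longleftrightarrow> le (inv_into A h x) (inv_into A h y)"
  proof (intro ballI)
    fix x y assume xy: "x \<in> B" "y \<in> B"
    have "inv_into A h x \<in> A" "inv_into A h y \<in> A" using b2 xy bij_betwE by blast+
    moreover have "h (inv_into A h x) = x" "h (inv_into A h y) = y"
      using xy b by (auto simp: bij_betw_def f_inv_into_f)
    ultimately show "le' x y \<longleftrightarrow> le (inv_into A h x) (inv_into A h y)" using o by metis
  qed
  then show ?thesis using b2 unfolding isoh_def by auto
qed

lemma isoh_comp:
  assumes "isoh h A le B le'" "isoh k B le' C lc" shows "isoh (k \<circ> h) A le C lc"
  using assms unfolding isoh_def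
  by (auto intro: bij_betw_trans dest: bij_betwE)

lemma isoh_mem: "isoh h A le B le' \<Longrightarrow> x \<in> A \<Longrightarrow> h x \<in> B"
  unfolding isoh_def by (auto dest: bij_betwE)

lemma isoh_inj: "isoh h A le B le' \<Longrightarrow> x \<in> A \<Longrightarrow> y \<in> A \<Longrightarrow> h x = h y \<Longrightarrow> x = y"
  unfolding isoh_def bij_betw_def by (auto dest: inj_onD)

lemma isoh_le: "isoh h A le B le' \<Longrightarrow> x \<in> A \<Longrightarrow> y \<in> A \<Longrightarrow> le x y \<longleftrightarrow> le' (h x) (h y)"
  unfolding isoh_def by auto

lemma isoh_img: "isoh h A le B le' \<Longrightarrow> h ` A = B"
  unfolding isoh_def bij_betw_def by auto

lemma isoh_surj: "isoh h A le B le' \<Longrightarrow> y \<in> B \<Longrightarrow> \<exists>x\<in>A. y = h x"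
  using isoh_img by blast

lemma isoh_card: "isoh h A le B le' \<Longrightarrow> card A = card B"
  unfolding isoh_def using bij_betw_same_card by blast

lemma isoh_finite: "isoh h A le B le' \<Longrightarrow> finite B \<Longrightarrow> finite A"
  unfolding isoh_def using bij_betw_finite by blast

lemma isoh_po: assumes "isoh h A le B le'" "po B le'" shows "po A le"
  unfolding po_def
proof (intro conjI ballI impI)
  fix x assume "x \<in> A" then show "le x x" using assms isoh_le isoh_mem po_refl by metis
next
  fix x y assume "x \<in> A" "y \<in> A" "le x y \<and> le y x"
  then have "le' (h x) (h y)" "le' (h y) (h x)" "h x \<in> B" "h y \<in> B"
    using isoh_le[OF assms(1)] isoh_mem[OF assms(1)] by auto
  then have "h x = h y" using po_antisym[OF assms(2)] by auto
  then show "x = y" using isoh_inj[OF assms(1)] \<open>x \<in> A\<close> \<open>y \<in> A\<close> by auto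
next
  fix x y z assume "x \<in> A" "y \<in> A" "z \<in> A" "le x y \<and> le y z"
  then have "le' (h x) (h y)" "le' (h y) (h z)" "h x \<in> B" "h y \<in> B" "h z \<in> B"
    using isoh_le[OF assms(1)] isoh_mem[OF assms(1)] by auto
  then have "le' (h x) (h z)" using po_trans[OF assms(2)] by blast
  then show "le x z" using isoh_le[OF assms(1)] \<open>x \<in> A\<close> \<open>z \<in> A\<close> by auto
qed

lemma isoh_covers:
  assumes "isoh h A le B le'" "x \<in> A" "y \<in> A"
  shows "covers A le x y \<longleftrightarrow> covers B le' (h x) (h y)"
proof
  assume c: "covers A le x y"
  show "covers B le' (h x) (h y)" unfolding covers_def
  proof (intro conjI ballI impI)
    fix z assume z: "z \<in> B" "le' (h x) z \<and> le' z (h y)"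
    obtain w where w: "w \<in> A" "z = h w" using isoh_surj[OF assms(1) z(1)] by auto
    have "le x w" "le w y" using z w isoh_le[OF assms(1)] assms by auto
    then have "w = x \<or> w = y" using c w unfolding covers_def by auto
    then show "z = h x \<or> z = h y" using w by auto
  next
    show "h x \<in> B" "h y \<in> B" using isoh_mem[OF assms(1)] assms(2,3) by auto
    have "le x y" using covers_mem[OF c] by blast
    then show "le' (h x) (h y)" using isoh_le[OF assms(1) assms(2,3)] by blast
    show "h x \<noteq> h y" using covers_mem[OF c] isoh_inj[OF assms(1) assms(2,3)] by blast
  qed
next
  assume c: "covers B le' (h x) (h y)"
  show "covers A le x y" unfolding covers_def
  proof (intro conjI ballI impI)
    fix z assume z: "z \<in> A" "le x z \<and> le z y"
    have "le' (h x) (h z)" "le' (h z) (h y)" using z isoh_le[OF assms(1)] assms by auto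
    then have "h z = h x \<or> h z = h y" using c z isoh_mem[OF assms(1)] unfolding covers_def by auto
    then show "z = x \<or> z = y" using isoh_inj[OF assms(1)] z assms by auto
  next
    show "x \<in> A" "y \<in> A" using assms by auto
    show "le x y" using covers_mem[OF c] isoh_le[OF assms] by blast
    show "x \<noteq> y" using covers_mem[OF c] by blast
  qed
qed

lemma isoh_covers2:
  assumes "isoh h A le B le'" "covers B le' u v"
  shows "\<exists>x\<in>A. \<exists>y\<in>A. u = h x \<and> v = h y \<and> covers A le x y"
proof -
  obtain x y where "x \<in> A" "y \<in> A" "u = h x" "v = h y" using covers_mem[OF assms(2)] isoh_surj[OF assms(1)] by metis
  then show ?thesis using isoh_covers[OF assms(1)] assms(2) by auto
qed

lemma isoh_bot:
  assumes "isoh h A le B le'" "b \<in> A" "\<forall>x\<in>A. le b x"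
  shows "h b \<in> B \<and> (\<forall>y\<in>B. le' (h b) y)"
proof -
  have "\<forall>y\<in>B. le' (h b) y"
  proof
    fix y assume "y \<in> B" then obtain x where "x \<in> A" "y = h x" using isoh_surj[OF assms(1)] by auto
    then show "le' (h b) y" using isoh_le[OF assms(1) assms(2)] assms(3) by auto
  qed
  then show ?thesis using isoh_mem[OF assms(1,2)] by auto
qed

lemma isoh_top:
  assumes "isoh h A le B le'" "b \<in> A" "\<forall>x\<in>A. le x b"
  shows "h b \<in> B \<and> (\<forall>y\<in>B. le' y (h b))"
proof -
  have "\<forall>y\<in>B. le' y (h b)"
  proof
    fix y assume "y \<in> B" then obtain x where "x \<in> A" "y = h x" using isoh_surj[OF assms(1)] by auto
    then show "le' y (h b)" using isoh_le[OF assms(1) _ assms(2)] assms(3) by auto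
  qed
  then show ?thesis using isoh_mem[OF assms(1,2)] by auto
qed

lemma isoh_pbot:
  assumes "isoh h A le B le'" "po B le'" "b \<in> A" "\<forall>x\<in>A. le b x"
  shows "pbot A le = b" "pbot B le' = h b"
  using pbot_eq[OF isoh_po[OF assms(1,2)] assms(3,4)] apply simp
  using pbot_eq[OF assms(2)] isoh_bot[OF assms(1,3,4)] by simp

lemma isoh_ptop:
  assumes "isoh h A le B le'" "po B le'" "b \<in> A" "\<forall>x\<in>A. le x b"
  shows "ptop A le = b" "ptop B le' = h b"
  using ptop_eq[OF isoh_po[OF assms(1,2)] assms(3,4)] apply simp
  using ptop_eq[OF assms(2)] isoh_top[OF assms(1,3,4)] by simp

lemma isoh_atoms:
  assumes "isoh h A le B le'" "po B le'" "b \<in> A" "\<forall>x\<in>A. le b x"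
  shows "atoms B le' = h ` atoms A le"
proof -
  note pb = isoh_pbot[OF assms]
  show ?thesis
  proof
    show "atoms B le' \<subseteq> h ` atoms A le"
    proof
      fix v assume "v \<in> atoms B le'"
      then have c: "covers B le' (h b) v" using pb unfolding atoms_def by auto
      then obtain x y where "x \<in> A" "y \<in> A" "h b = h x" "v = h y" "covers A le x y"
        using isoh_covers2[OF assms(1) c] by auto
      then show "v \<in> h ` atoms A le" using isoh_inj[OF assms(1)] assms(3) pb unfolding atoms_def by auto
    qed
    show "h ` atoms A le \<subseteq> atoms B le'"
    proof
      fix v assume "v \<in> h ` atoms A le"
      then obtain x where x: "covers A le b x" "v = h x" using pb unfolding atoms_def by auto
      have "x \<in> A" using covers_mem[OF x(1)] by blast
      then have "covers B le' (h b) (h x)" using isoh_covers[OF assms(1) assms(3)] x(1) by blast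
      then show "v \<in> atoms B le'" using pb x(2) unfolding atoms_def by simp
    qed
  qed
qed

lemma isoh_coatoms:
  assumes "isoh h A le B le'" "po B le'" "b \<in> A" "\<forall>x\<in>A. le x b"
  shows "coatoms B le' = h ` coatoms A le"
proof -
  note pb = isoh_ptop[OF assms]
  show ?thesis
  proof
    show "coatoms B le' \<subseteq> h ` coatoms A le"
    proof
      fix v assume "v \<in> coatoms B le'"
      then have c: "covers B le' v (h b)" using pb unfolding coatoms_def by auto
      then obtain x y where "x \<in> A" "y \<in> A" "v = h x" "h b = h y" "covers A le x y"
        using isoh_covers2[OF assms(1) c] by auto
      then show "v \<in> h ` coatoms A le" using isoh_inj[OF assms(1)] assms(3) pb unfolding coatoms_def by auto
    qed
    show "h ` coatoms A le \<subseteq> coatoms B le'"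
    proof
      fix v assume "v \<in> h ` coatoms A le"
      then obtain x where x: "covers A le x b" "v = h x" using pb unfolding coatoms_def by auto
      have "x \<in> A" using covers_mem[OF x(1)] by blast
      then have "covers B le' (h x) (h b)" using isoh_covers[OF assms(1) _ assms(3)] x(1) by blast
      then show "v \<in> coatoms B le'" using pb x(2) unfolding coatoms_def by simp
    qed
  qed
qed

lemma isoh_rank:
  assumes "isoh h A le B le'" "po B le'" "b \<in> A" "\<forall>x\<in>A. le b x" "rank_fun B le' \<rho>"
  shows "rank_fun A le (\<rho> \<circ> h)"
  unfolding rank_fun_def
proof (intro conjI allI impI)
  show "(\<rho> \<circ> h) (pbot A le) = 0" using assms(5) isoh_pbot[OF assms(1-4)] unfolding rank_fun_def by simp
  fix x y assume c: "covers A le x y"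
  then have "covers B le' (h x) (h y)" using isoh_covers[OF assms(1)] covers_mem[OF c] by blast
  then show "(\<rho> \<circ> h) y = (\<rho> \<circ> h) x + 1" using assms(5) unfolding rank_fun_def by simp
qed

lemma is_neckE:
  assumes "is_neck A le \<rho> a b"
  obtains "a \<in> A" "b \<in> A" "a \<noteq> b" "\<rho> a = \<rho> b" "{x\<in>A. \<rho> x = \<rho> a} = {a, b}"
    "a \<notin> atoms A le" "a \<notin> coatoms A le" "b \<notin> atoms A le" "b \<notin> coatoms A le"
proof -
  have H: "a \<in> A \<and> b \<in> A \<and> a \<noteq> b \<and> \<rho> a = \<rho> b \<and> {x\<in>A. \<rho> x = \<rho> a} = {a, b}
     \<and> a \<notin> atoms A le \<and> a \<notin> coatoms A le \<and> b \<notin> atoms A le \<and> b \<notin> coatoms A le"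
    using assms unfolding is_neck_def .
  show ?thesis
    apply (rule that) using H by blast+
qed
lemma is_neckI:
  assumes "a \<in> A" "b \<in> A" "a \<noteq> b" "\<rho> a = \<rho> b" "{x\<in>A. \<rho> x = \<rho> a} = {a, b}"
    "a \<notin> atoms A le" "a \<notin> coatoms A le" "b \<notin> atoms A le" "b \<notin> coatoms A le"
  shows "is_neck A le \<rho> a b"
  unfolding is_neck_def using assms by (intro conjI)

lemma isoh_neck:
  assumes "isoh h A le B le'" "po B le'" "b \<in> A" "\<forall>x\<in>A. le b x" "t \<in> A" "\<forall>x\<in>A. le x t"
    "is_neck A le (\<rho> \<circ> h) x y"
  shows "is_neck B le' \<rho> (h x) (h y)"
proof -
  note at = isoh_atoms[OF assms(1-4)] and co = isoh_coatoms[OF assms(1,2,5,6)]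
  obtain x: "x \<in> A" and y: "y \<in> A"
    and xn: "x \<notin> atoms A le" "x \<notin> coatoms A le" "y \<notin> atoms A le" "y \<notin> coatoms A le"
    and xy: "x \<noteq> y" "\<rho> (h x) = \<rho> (h y)"
    and S: "{z\<in>A. \<rho> (h z) = \<rho> (h x)} = {x, y}"
    using is_neckE[OF assms(7)] unfolding comp_def by blast
  have hi: "S \<subseteq> A \<Longrightarrow> w \<in> A \<Longrightarrow> h w \<in> h ` S \<Longrightarrow> w \<in> S" for w S
  proof -
    assume "S \<subseteq> A" "w \<in> A" "h w \<in> h ` S"
    then obtain s where "s \<in> S" "h w = h s" by auto
    then have "w = s" using isoh_inj[OF assms(1) \<open>w \<in> A\<close>, of s] \<open>S \<subseteq> A\<close> by blast
    then show "w \<in> S" using \<open>s \<in> S\<close> by simp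
  qed
  have sa: "atoms A le \<subseteq> A" "coatoms A le \<subseteq> A" unfolding atoms_def coatoms_def covers_def by auto
  have n1: "h x \<notin> atoms B le'" "h y \<notin> atoms B le'" "h x \<notin> coatoms B le'" "h y \<notin> coatoms B le'"
    using xn at co hi[OF sa(1)] hi[OF sa(2)] x y by auto
  have "{z\<in>B. \<rho> z = \<rho> (h x)} = {h x, h y}"
  proof
    show "{z\<in>B. \<rho> z = \<rho> (h x)} \<subseteq> {h x, h y}"
    proof
      fix z assume z: "z \<in> {z\<in>B. \<rho> z = \<rho> (h x)}"
      then obtain w where "w \<in> A" "z = h w" using isoh_surj[OF assms(1)] by blast
      then have "w \<in> {x,y}" using S z by auto
      then show "z \<in> {h x, h y}" using \<open>z = h w\<close> by auto
    qed
    show "{h x, h y} \<subseteq> {z\<in>B. \<rho> z = \<rho> (h x)}" using isoh_mem[OF assms(1) x] isoh_mem[OF assms(1) y] xy by auto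
  qed
  moreover have "h x \<noteq> h y" using isoh_inj[OF assms(1) x y] xy by blast
  ultimately show ?thesis using is_neckI[of "h x" B "h y" \<rho> le'] n1 xy isoh_mem[OF assms(1) x] isoh_mem[OF assms(1) y] by blast
qed

locale vs =
  fixes A :: "'a set" and le :: "'a \<Rightarrow> 'a \<Rightarrow> bool" and B :: "'a set" and le' :: "'a \<Rightarrow> 'a \<Rightarrow> bool"
    and \<phi> :: "'a \<Rightarrow> 'a" and \<rho>A :: "'a \<Rightarrow> nat" and \<rho>B :: "'a \<Rightarrow> nat"
  assumes finA: "finite A" and latA: "is_lattice A le"
    and finB: "finite B" and latB: "is_lattice B le'"
    and rkA: "rank_fun A le \<rho>A" and rA3: "\<rho>A (ptop A le) \<ge> 3"
    and rkB: "rank_fun B le' \<rho>B" and rB3: "\<rho>B (ptop B le') \<ge> 3"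
    and cA: "card (coatoms A le) = 2" and cB: "card (atoms B le') = 2"
    and phi: "bij_betw \<phi> (coatoms A le) (atoms B le')"
begin

abbreviation "tA \<equiv> ptop A le"
abbreviation "bA \<equiv> pbot A le"
abbreviation "tB \<equiv> ptop B le'"
abbreviation "bB \<equiv> pbot B le'"
abbreviation "coA \<equiv> coatoms A le"
abbreviation "atB \<equiv> atoms B le'"
abbreviation "\<psi> \<equiv> inv_into coA \<phi>"
abbreviation "rA \<equiv> \<rho>A tA"

definition g :: "'a \<Rightarrow> 'a + 'a" where
  "g u = (if u \<in> atB then Inl (\<psi> u) else Inr u)"

definition R0 :: "'a + 'a \<Rightarrow> 'a + 'a \<Rightarrow> bool" where
  "R0 x y \<longleftrightarrow> (\<exists>a b. a \<in> A - {tA} \<and> b \<in> A - {tA} \<and> x = Inl a \<and> y = Inl b \<and> le a b)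
     \<or> (\<exists>u v. u \<in> B - {bB} \<and> v \<in> B - {bB} \<and> x = g u \<and> y = g v \<and> le' u v)"

definition S :: "('a + 'a) set" where
  "S = Inl ` (A - {tA}) \<union> Inr ` (B - {bB} - atB)"

definition L :: "'a + 'a \<Rightarrow> 'a + 'a \<Rightarrow> bool" where
  "L = tranclp R0"

lemma vsum2_eq: "vsum2 A le B le' \<phi> = (S, L)"
  unfolding vsum2_def Let_def S_def L_def R0_def g_def by simp

lemma poA: "po A le" using lattice_po[OF latA] .
lemma poB: "po B le'" using lattice_po[OF latB] .
lemma tA: "tA \<in> A" "\<And>x. x \<in> A \<Longrightarrow> le x tA" using ptop_props[OF finA latA] by auto
lemma bA: "bA \<in> A" "\<And>x. x \<in> A \<Longrightarrow> le bA x" using pbot_props[OF finA latA] by auto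
lemma tB: "tB \<in> B" "\<And>x. x \<in> B \<Longrightarrow> le' x tB" using ptop_props[OF finB latB] by auto
lemma bB: "bB \<in> B" "\<And>x. x \<in> B \<Longrightarrow> le' bB x" using pbot_props[OF finB latB] by auto

lemma rA0: "\<rho>A bA = 0" using rkA unfolding rank_fun_def by simp
lemma rB0: "\<rho>B bB = 0" using rkB unfolding rank_fun_def by simp
lemma rkA_cov: "covers A le x y \<Longrightarrow> \<rho>A y = \<rho>A x + 1" using rkA unfolding rank_fun_def by simp
lemma rkB_cov: "covers B le' x y \<Longrightarrow> \<rho>B y = \<rho>B x + 1" using rkB unfolding rank_fun_def by simp

lemma tA_ne_bA: "tA \<noteq> bA" using rA3 rA0 by auto
lemma tB_ne_bB: "tB \<noteq> bB" using rB3 rB0 by auto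

lemma coA_props: "c \<in> coA \<Longrightarrow> c \<in> A \<and> c \<noteq> tA \<and> covers A le c tA \<and> \<rho>A c + 1 = rA"
proof -
  assume "c \<in> coA"
  then have cv: "covers A le c tA" unfolding coatoms_def by simp
  show ?thesis using covers_mem[OF cv] rkA_cov[OF cv] cv by simp
qed

lemma atB_props: "u \<in> atB \<Longrightarrow> u \<in> B \<and> u \<noteq> bB \<and> covers B le' bB u \<and> \<rho>B u = 1"
proof -
  assume "u \<in> atB"
  then have cv: "covers B le' bB u" unfolding atoms_def by simp
  show ?thesis using covers_mem[OF cv] rkB_cov[OF cv] rB0 cv by auto
qed

lemma rankA_strict: "x \<in> A \<Longrightarrow> y \<in> A \<Longrightarrow> le x y \<Longrightarrow> x \<noteq> y \<Longrightarrow> \<rho>A x < \<rho>A y"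
  using rank_strict[OF finA poA rkA] by blast
lemma rankB_strict: "x \<in> B \<Longrightarrow> y \<in> B \<Longrightarrow> le' x y \<Longrightarrow> x \<noteq> y \<Longrightarrow> \<rho>B x < \<rho>B y"
  using rank_strict[OF finB poB rkB] by blast

lemma atA_props: "a \<in> atoms A le \<Longrightarrow> a \<in> A \<and> a \<noteq> tA \<and> \<rho>A a = 1"
proof -
  assume "a \<in> atoms A le"
  then have c: "covers A le bA a" unfolding atoms_def by simp
  then have "\<rho>A a = 1" using rkA_cov rA0 by simp
  then show ?thesis using covers_mem[OF c] rA3 by auto
qed

lemma coB_props: "u \<in> coatoms B le' \<Longrightarrow> u \<in> B \<and> u \<noteq> bB \<and> u \<notin> atB \<and> \<rho>B u + 1 = \<rho>B tB \<and> covers B le' u tB"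
proof -
  assume "u \<in> coatoms B le'"
  then have c: "covers B le' u tB" unfolding coatoms_def by simp
  then have r: "\<rho>B u + 1 = \<rho>B tB" using rkB_cov by simp
  then have "u \<notin> atB" using atB_props[of u] rB3 by auto
  moreover have "u \<noteq> bB" using r rB0 rB3 by auto
  ultimately show ?thesis using covers_mem[OF c] r c by auto
qed

lemma co_max: "c \<in> coA \<Longrightarrow> a \<in> A \<Longrightarrow> a \<noteq> tA \<Longrightarrow> le c a \<Longrightarrow> a = c"
proof -
  assume c: "c \<in> coA" and a: "a \<in> A" "a \<noteq> tA" "le c a"
  have "covers A le c tA" using coA_props[OF c] by blast
  then have "a = c \<or> a = tA" using a tA(2)[OF a(1)] unfolding covers_def by blast
  then show "a = c" using a by blast
qed

lemma at_min: "u \<in> atB \<Longrightarrow> v \<in> B \<Longrightarrow> v \<noteq> bB \<Longrightarrow> le' v u \<Longrightarrow> v = u"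
proof -
  assume u: "u \<in> atB" and v: "v \<in> B" "v \<noteq> bB" "le' v u"
  have "covers B le' bB u" using atB_props[OF u] by blast
  then have "v = bB \<or> v = u" using v bB(2)[OF v(1)] unfolding covers_def by blast
  then show "v = u" using v by blast
qed

lemma phi_at: "c \<in> coA \<Longrightarrow> \<phi> c \<in> atB" using phi bij_betwE by blast
lemma psi_co: "u \<in> atB \<Longrightarrow> \<psi> u \<in> coA"
  using phi by (metis bij_betw_def inv_into_into)
lemma phi_psi: "u \<in> atB \<Longrightarrow> \<phi> (\<psi> u) = u"
  using phi by (metis bij_betw_def f_inv_into_f)
lemma psi_phi: "c \<in> coA \<Longrightarrow> \<psi> (\<phi> c) = c"
  using phi by (metis bij_betw_def inv_into_f_f)

lemma g_at: "u \<in> atB \<Longrightarrow> g u = Inl (\<psi> u)" unfolding g_def by simp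
lemma g_nat: "u \<notin> atB \<Longrightarrow> g u = Inr u" unfolding g_def by simp
lemma g_Inl: "g u = Inl a \<Longrightarrow> u \<in> atB \<and> a = \<psi> u" unfolding g_def by (cases "u \<in> atB") auto
lemma g_Inr: "g u = Inr w \<Longrightarrow> u \<notin> atB \<and> w = u" unfolding g_def by (cases "u \<in> atB") auto
lemma g_phi: "c \<in> coA \<Longrightarrow> g (\<phi> c) = Inl c" using g_at[OF phi_at] psi_phi by simp
lemma g_inj: "g u = g v \<Longrightarrow> u \<in> atB \<Longrightarrow> v \<in> atB \<Longrightarrow> u = v"
  using g_at phi_psi by (metis sum.inject(1))
lemma g_inj': "g u = g v \<Longrightarrow> u = v"
proof -
  assume e: "g u = g v"
  show "u = v"
  proof (cases "u \<in> atB")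
    case True
    then have "g v = Inl (\<psi> u)" using e g_at by simp
    then have "v \<in> atB" "\<psi> u = \<psi> v" using g_Inl by blast+
    then show ?thesis using phi_psi True by metis
  next
    case False
    then have "g v = Inr u" using e g_nat by simp
    then show ?thesis using g_Inr by blast
  qed
qed

lemma coA_sub: "c \<in> coA \<Longrightarrow> c \<in> A - {tA}" using coA_props by blast
lemma atB_sub: "u \<in> atB \<Longrightarrow> u \<in> B - {bB}" using atB_props by blast

lemma g_S: "u \<in> B - {bB} \<Longrightarrow> g u \<in> S"
  unfolding S_def using g_at g_nat coA_sub psi_co by (cases "u \<in> atB") auto

definition Phi :: "'a + 'a \<Rightarrow> 'a + 'a \<Rightarrow> bool" where
  "Phi x y \<longleftrightarrow> (\<exists>a b. a \<in> A - {tA} \<and> b \<in> A - {tA} \<and> x = Inl a \<and> y = Inl b \<and> le a b)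
     \<or> (\<exists>u v. u \<in> B - {bB} \<and> v \<in> B - {bB} \<and> x = g u \<and> y = g v \<and> le' u v)
     \<or> (\<exists>a c v. a \<in> A - {tA} \<and> c \<in> coA \<and> v \<in> B - {bB} \<and> le a c \<and> le' (\<phi> c) v \<and> x = Inl a \<and> y = g v)"

lemma PhiE:
  assumes "Phi x y"
  obtains (c1) a b where "a \<in> A - {tA}" "b \<in> A - {tA}" "x = Inl a" "y = Inl b" "le a b"
    | (c2) u v where "u \<in> B - {bB}" "v \<in> B - {bB}" "x = g u" "y = g v" "le' u v"
    | (c3) a c v where "a \<in> A - {tA}" "c \<in> coA" "v \<in> B - {bB}" "le a c" "le' (\<phi> c) v" "x = Inl a" "y = g v"
  using assms unfolding Phi_def by blast

lemma Phi1: "a \<in> A - {tA} \<Longrightarrow> b \<in> A - {tA} \<Longrightarrow> le a b \<Longrightarrow> Phi (Inl a) (Inl b)"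
  unfolding Phi_def by blast
lemma Phi2: "u \<in> B - {bB} \<Longrightarrow> v \<in> B - {bB} \<Longrightarrow> le' u v \<Longrightarrow> Phi (g u) (g v)"
  unfolding Phi_def by blast
lemma Phi3: "a \<in> A - {tA} \<Longrightarrow> c \<in> coA \<Longrightarrow> v \<in> B - {bB} \<Longrightarrow> le a c \<Longrightarrow> le' (\<phi> c) v \<Longrightarrow> Phi (Inl a) (g v)"
  unfolding Phi_def by blast

lemma transA: "x \<in> A \<Longrightarrow> y \<in> A \<Longrightarrow> z \<in> A \<Longrightarrow> le x y \<Longrightarrow> le y z \<Longrightarrow> le x z"
  using po_trans[OF poA] by blast
lemma transB: "x \<in> B \<Longrightarrow> y \<in> B \<Longrightarrow> z \<in> B \<Longrightarrow> le' x y \<Longrightarrow> le' y z \<Longrightarrow> le' x z"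
  using po_trans[OF poB] by blast

lemma Phi_trans:
  assumes xy: "Phi x y" and yz: "Phi y z" shows "Phi x z"
  using xy
proof (cases rule: PhiE)
  case (c1 a b)
  from yz show ?thesis
  proof (cases rule: PhiE)
    case (c1 b' d)
    then show ?thesis using \<open>y = Inl b\<close> \<open>x = Inl a\<close> \<open>le a b\<close> \<open>a \<in> A - {tA}\<close> \<open>b \<in> A - {tA}\<close>
      using Phi1 transA by (metis DiffD1 sum.inject(1))
  next
    case (c2 u v)
    have "u \<in> atB" "b = \<psi> u" using g_Inl \<open>y = Inl b\<close> \<open>y = g u\<close> by metis+
    then have "b \<in> coA" "\<phi> b = u" using psi_co phi_psi by auto
    then show ?thesis using Phi3[of a b v] c2 \<open>x = Inl a\<close> \<open>le a b\<close> \<open>a \<in> A - {tA}\<close> by simp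
  next
    case (c3 b' c v)
    then have "b' = b" using \<open>y = Inl b\<close> by simp
    then have "le a c" using transA[of a b c] c3 \<open>le a b\<close> \<open>a \<in> A - {tA}\<close> \<open>b \<in> A - {tA}\<close> coA_sub by blast
    then show ?thesis using Phi3[of a c v] c3 \<open>x = Inl a\<close> \<open>a \<in> A - {tA}\<close> by simp
  qed
next
  case (c2 u v)
  from yz show ?thesis
  proof (cases rule: PhiE)
    case (c1 b d)
    have "v \<in> atB" "b = \<psi> v" using g_Inl \<open>y = Inl b\<close> \<open>y = g v\<close> by metis+
    then have "b \<in> coA" using psi_co by auto
    then have "d = b" using co_max c1 by blast
    then have "z = y" using c1 by simp
    then show ?thesis using xy by simp
  next
    case (c2 v' w)
    then have "v' = v" using g_inj' \<open>y = g v\<close> by metis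
    then show ?thesis using Phi2[of u w] c2 \<open>x = g u\<close> \<open>le' u v\<close> \<open>u \<in> B - {bB}\<close> \<open>v \<in> B - {bB}\<close> transB[of u v w] by blast
  next
    case (c3 a' c w)
    have "v \<in> atB" "a' = \<psi> v" using g_Inl \<open>y = Inl a'\<close> \<open>y = g v\<close> by metis+
    then have "a' \<in> coA" using psi_co by auto
    then have "c = a'" using co_max[of a' c] c3 coA_sub by blast
    then have "\<phi> c = v" using phi_psi \<open>v \<in> atB\<close> \<open>a' = \<psi> v\<close> by simp
    then have "le' u w" using transB[of u v w] c3 \<open>le' u v\<close> \<open>u \<in> B - {bB}\<close> \<open>v \<in> B - {bB}\<close> by auto
    then show ?thesis using Phi2[of u w] c3 \<open>x = g u\<close> \<open>u \<in> B - {bB}\<close> by blast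
  qed
next
  case (c3 a c v)
  from yz show ?thesis
  proof (cases rule: PhiE)
    case (c1 b d)
    have "v \<in> atB" "b = \<psi> v" using g_Inl \<open>y = Inl b\<close> \<open>y = g v\<close> by metis+
    then have "b \<in> coA" using psi_co by auto
    then have "d = b" using co_max c1 by blast
    then have "z = y" using c1 by simp
    then show ?thesis using xy by simp
  next
    case (c2 v' w)
    then have "v' = v" using g_inj' \<open>y = g v\<close> by metis
    have "\<phi> c \<in> B - {bB}" using atB_sub phi_at \<open>c \<in> coA\<close> by blast
    then have "le' (\<phi> c) w" using transB[of "\<phi> c" v w] c2 \<open>v' = v\<close> \<open>le' (\<phi> c) v\<close> \<open>v \<in> B - {bB}\<close> by blast
    then show ?thesis using Phi3[of a c w] c2 \<open>x = Inl a\<close> \<open>a \<in> A - {tA}\<close> \<open>c \<in> coA\<close> \<open>le a c\<close> by blast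
  next
    case (c3 a' c' w)
    have "v \<in> atB" "a' = \<psi> v" using g_Inl \<open>y = Inl a'\<close> \<open>y = g v\<close> by metis+
    then have "a' \<in> coA" using psi_co by auto
    then have "c' = a'" using co_max[of a' c'] c3 coA_sub by blast
    have "\<phi> c \<in> B - {bB}" using atB_sub phi_at \<open>c \<in> coA\<close> by blast
    then have "\<phi> c = v" using at_min[OF \<open>v \<in> atB\<close>, of "\<phi> c"] \<open>le' (\<phi> c) v\<close> by blast
    then have "c = c'" using psi_phi[OF \<open>c \<in> coA\<close>] \<open>a' = \<psi> v\<close> \<open>c' = a'\<close> by simp
    then show ?thesis using Phi3[of a c w] c3 \<open>x = Inl a\<close> \<open>a \<in> A - {tA}\<close> \<open>c \<in> coA\<close> \<open>le a c\<close> by blast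
  qed
qed

lemma R0_Phi: "R0 x y \<Longrightarrow> Phi x y"
  unfolding R0_def Phi_def by blast

lemma L_Phi: "L x y \<longleftrightarrow> Phi x y"
proof
  assume "L x y"
  then show "Phi x y" unfolding L_def
  proof (induction rule: tranclp.induct)
    case (r_into_trancl a b) then show ?case using R0_Phi by blast
  next
    case (trancl_into_trancl a b c) then show ?case using R0_Phi Phi_trans by blast
  qed
next
  assume "Phi x y"
  then show "L x y"
  proof (cases rule: PhiE)
    case (c1 a b) then show ?thesis unfolding L_def R0_def by blast
  next
    case (c2 u v) then show ?thesis unfolding L_def R0_def by blast
  next
    case (c3 a c v)
    have "R0 (Inl a) (Inl c)" unfolding R0_def using c3 coA_sub by blast
    moreover have "R0 (g (\<phi> c)) (g v)" unfolding R0_def using c3 atB_sub phi_at by blast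
    ultimately show ?thesis unfolding L_def using g_phi[OF \<open>c \<in> coA\<close>] c3
      by (metis tranclp.r_into_trancl tranclp.trancl_into_trancl)
  qed
qed

end

context vs begin

lemma ex_co: "a \<in> A - {tA} \<Longrightarrow> \<exists>c\<in>coA. le a c"
proof -
  assume a: "a \<in> A - {tA}"
  obtain c where "c \<in> A" "covers A le c tA" "le a c"
    using cover_below[OF finA poA _ tA(1) tA(2)] a by blast
  then show ?thesis unfolding coatoms_def by blast
qed

lemma ex_at: "w \<in> B - {bB} \<Longrightarrow> \<exists>u\<in>atB. le' u w"
proof -
  assume w: "w \<in> B - {bB}"
  obtain u where "u \<in> B" "covers B le' bB u" "le' u w"
    using cover_above[OF finB poB bB(1) _ bB(2)] w by blast
  then show ?thesis unfolding atoms_def by blast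
qed

lemma o1: "a \<in> A - {tA} \<Longrightarrow> b \<in> A - {tA} \<Longrightarrow> L (Inl a) (Inl b) \<longleftrightarrow> le a b"
proof
  assume ab: "a \<in> A - {tA}" "b \<in> A - {tA}"
  assume "L (Inl a) (Inl b)"
  then have "Phi (Inl a) (Inl b)" using L_Phi by blast
  then show "le a b"
  proof (cases rule: PhiE)
    case (c1 a' b') then show ?thesis by simp
  next
    case (c2 u v)
    have u: "u \<in> atB" "a = \<psi> u" using g_Inl c2 by metis+
    have v: "v \<in> atB" "b = \<psi> v" using g_Inl c2 by metis+
    have "u = v" using at_min[OF v(1), of u] c2 by blast
    then show ?thesis using u v po_refl[OF poA] ab by simp
  next
    case (c3 a' c v)
    have v: "v \<in> atB" "b = \<psi> v" using g_Inl c3 by metis+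
    have "\<phi> c = v" using at_min[OF v(1), of "\<phi> c"] c3 atB_sub phi_at by blast
    then have "c = b" using psi_phi c3 v by metis
    then show ?thesis using c3 by simp
  qed
next
  assume ab: "a \<in> A - {tA}" "b \<in> A - {tA}" "le a b"
  then show "L (Inl a) (Inl b)" using Phi1 L_Phi by blast
qed

lemma o2: "u \<in> B - {bB} \<Longrightarrow> v \<in> B - {bB} \<Longrightarrow> L (g u) (g v) \<longleftrightarrow> le' u v"
proof
  assume uv: "u \<in> B - {bB}" "v \<in> B - {bB}"
  assume "L (g u) (g v)"
  then have "Phi (g u) (g v)" using L_Phi by blast
  then show "le' u v"
  proof (cases rule: PhiE)
    case (c1 a b)
    have u: "u \<in> atB" "a = \<psi> u" using g_Inl c1 by metis+
    have v: "v \<in> atB" "b = \<psi> v" using g_Inl c1 by metis+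
    have "b = a" using co_max[of a b] psi_co u c1 by blast
    then have "u = v" using u v phi_psi by metis
    then show ?thesis using po_refl[OF poB] uv by simp
  next
    case (c2 u' v')
    then have "u' = u" "v' = v" using g_inj' by metis+
    then show ?thesis using c2 by simp
  next
    case (c3 a c v')
    have u: "u \<in> atB" "a = \<psi> u" using g_Inl c3 by metis+
    have "c = a" using co_max[of a c] psi_co u c3 coA_sub by blast
    then have "\<phi> c = u" using u phi_psi by simp
    moreover have "v' = v" using g_inj' c3 by metis
    ultimately show ?thesis using c3 by simp
  qed
next
  assume "u \<in> B - {bB}" "v \<in> B - {bB}" "le' u v"
  then show "L (g u) (g v)" using Phi2 L_Phi by blast
qed

lemma o3: "L x (Inl b) \<Longrightarrow> \<exists>a\<in>A - {tA}. x = Inl a"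
proof -
  assume "L x (Inl b)"
  then have "Phi x (Inl b)" using L_Phi by blast
  then show ?thesis
  proof (cases rule: PhiE)
    case (c1 a b') then show ?thesis by blast
  next
    case (c2 u v)
    have gv: "g v = Inl b" using c2(4) by simp
    note v = g_Inl[OF gv]
    have "u = v" using at_min[OF conjunct1[OF v], of u] c2(1,5) by blast
    then have xe: "x = Inl b" using c2(3) gv by simp
    have "\<psi> v \<in> coA" using psi_co[OF conjunct1[OF v]] .
    then have "b \<in> coA" using conjunct2[OF v] by simp
    then have "b \<in> A - {tA}" using coA_sub by blast
    then show ?thesis using xe by blast
  next
    case (c3 a c v) then show ?thesis by blast
  qed
qed

lemma o4: "L (g u) y \<Longrightarrow> \<exists>v\<in>B - {bB}. y = g v"
proof -
  assume "L (g u) y"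
  then have "Phi (g u) y" using L_Phi by blast
  then show ?thesis
  proof (cases rule: PhiE)
    case (c1 a b)
    have u: "u \<in> atB" "a = \<psi> u" using g_Inl c1 by metis+
    have "b = a" using co_max[of a b] psi_co u c1 by blast
    then have "y = g u" using c1 u g_at by simp
    then show ?thesis using u atB_sub by blast
  next
    case (c2 u' v) then show ?thesis by blast
  next
    case (c3 a c v) then show ?thesis by blast
  qed
qed

lemma S_cases: "x \<in> S \<Longrightarrow> (\<exists>a\<in>A - {tA}. x = Inl a) \<or> (\<exists>u\<in>B - {bB}. x = g u)"
proof -
  assume "x \<in> S"
  then consider (l) a where "a \<in> A - {tA}" "x = Inl a" | (r) w where "w \<in> B - {bB} - atB" "x = Inr w"
    unfolding S_def by blast
  then show ?thesis
  proof cases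
    case l then show ?thesis by blast
  next
    case r then have "x = g w" using g_nat by simp
    then show ?thesis using r by blast
  qed
qed

lemma Inl_S: "a \<in> A - {tA} \<Longrightarrow> Inl a \<in> S" unfolding S_def by blast

lemma L_S: "L x y \<Longrightarrow> x \<in> S \<and> y \<in> S"
proof -
  assume "L x y"
  then have "Phi x y" using L_Phi by blast
  then show ?thesis
    by (cases rule: PhiE) (use Inl_S g_S in auto)
qed

lemma Inl_g: "a \<in> A - {tA} \<Longrightarrow> u \<in> B - {bB} \<Longrightarrow> Inl a = g u \<Longrightarrow> a \<in> coA \<and> u = \<phi> a"
  using g_Inl psi_co phi_psi by metis

lemma poS: "po S L"
  unfolding po_def
proof (intro conjI ballI impI)
  fix x assume "x \<in> S"
  then show "L x x" using S_cases o1 o2 po_refl[OF poA] po_refl[OF poB] by blast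
next
  fix x y assume xy: "x \<in> S" "y \<in> S" "L x y \<and> L y x"
  show "x = y"
  proof (cases "(\<exists>a\<in>A - {tA}. x = Inl a) \<and> (\<exists>b\<in>A - {tA}. y = Inl b)")
    case True
    then obtain a b where ab: "a \<in> A - {tA}" "b \<in> A - {tA}" "x = Inl a" "y = Inl b" by blast
    then have "le a b" "le b a" using o1 xy by blast+
    then show ?thesis using po_antisym[OF poA] ab by blast
  next
    case F1: False
    show ?thesis
    proof (cases "(\<exists>u\<in>B - {bB}. x = g u) \<and> (\<exists>v\<in>B - {bB}. y = g v)")
      case True
      then obtain u v where uv: "u \<in> B - {bB}" "v \<in> B - {bB}" "x = g u" "y = g v" by blast
      then have "le' u v" "le' v u" using o2 xy by blast+
      then show ?thesis using po_antisym[OF poB] uv by blast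
    next
      case False
      from F1 False xy(1,2) S_cases
      have "((\<exists>u\<in>B - {bB}. x = g u) \<and> (\<exists>b\<in>A - {tA}. y = Inl b)) \<or>
            ((\<exists>a\<in>A - {tA}. x = Inl a) \<and> (\<exists>v\<in>B - {bB}. y = g v))" by blast
      then show ?thesis
      proof
        assume H: "(\<exists>u\<in>B - {bB}. x = g u) \<and> (\<exists>b\<in>A - {tA}. y = Inl b)"
        then obtain u where "u \<in> B - {bB}" "x = g u" by blast
        then have "\<exists>v\<in>B - {bB}. y = g v" using o4 xy by blast
        then show ?thesis using H False by blast
      next
        assume H: "(\<exists>a\<in>A - {tA}. x = Inl a) \<and> (\<exists>v\<in>B - {bB}. y = g v)"
        then obtain v where "v \<in> B - {bB}" "y = g v" by blast
        then have "\<exists>u\<in>B - {bB}. x = g u" using o4 xy by blast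
        then show ?thesis using H False by blast
      qed
    qed
  qed
next
  fix x y z assume "x \<in> S" "y \<in> S" "z \<in> S" "L x y \<and> L y z"
  then show "L x z" unfolding L_def by (meson tranclp_trans)
qed

lemma tB_nat: "tB \<notin> atB" using atB_props[of tB] rB3 by auto
lemma tB_sub: "tB \<in> B - {bB}" using tB(1) tB_ne_bB by blast
lemma g_tB: "g tB = Inr tB" using g_nat[OF tB_nat] .
lemma bA_sub: "bA \<in> A - {tA}" using bA(1) tA_ne_bA by auto

lemma topS: "Inr tB \<in> S" "\<And>x. x \<in> S \<Longrightarrow> L x (Inr tB)"
proof -
  show "Inr tB \<in> S" using g_S[OF tB_sub] g_tB by simp
  fix x assume "x \<in> S"
  then show "L x (Inr tB)"
  proof (cases rule: disjE[OF S_cases])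
    assume "\<exists>a\<in>A - {tA}. x = Inl a"
    then obtain a where a: "a \<in> A - {tA}" "x = Inl a" by blast
    then obtain c where c: "c \<in> coA" "le a c" using ex_co by blast
    have "le' (\<phi> c) tB" using tB(2) atB_props phi_at c by blast
    then have "Phi (Inl a) (g tB)" using Phi3[OF a(1) c(1) tB_sub c(2)] by blast
    then show ?thesis using L_Phi a g_tB by simp
  next
    assume "\<exists>u\<in>B - {bB}. x = g u"
    then obtain u where u: "u \<in> B - {bB}" "x = g u" by blast
    then have "L (g u) (g tB)" using o2[OF u(1) tB_sub] tB(2) by blast
    then show ?thesis using u g_tB by simp
  qed
qed

lemma botS: "Inl bA \<in> S" "\<And>x. x \<in> S \<Longrightarrow> L (Inl bA) x"
proof -
  show "Inl bA \<in> S" using Inl_S[OF bA_sub] .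
  fix x assume "x \<in> S"
  then show "L (Inl bA) x"
  proof (cases rule: disjE[OF S_cases])
    assume "\<exists>a\<in>A - {tA}. x = Inl a"
    then obtain a where a: "a \<in> A - {tA}" "x = Inl a" by blast
    then show ?thesis using o1[OF bA_sub a(1)] bA(2) by blast
  next
    assume "\<exists>u\<in>B - {bB}. x = g u"
    then obtain w where w: "w \<in> B - {bB}" "x = g w" by blast
    then obtain u where u: "u \<in> atB" "le' u w" using ex_at by blast
    have "\<psi> u \<in> coA" "\<phi> (\<psi> u) = u" using psi_co phi_psi u by auto
    moreover have "le bA (\<psi> u)" using bA(2) coA_props \<open>\<psi> u \<in> coA\<close> by blast
    ultimately have "Phi (Inl bA) (g w)" using Phi3[OF bA_sub _ w(1)] u by metis
    then show ?thesis using L_Phi w by simp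
  qed
qed

lemma ptopS: "ptop S L = Inr tB" using ptop_eq[OF poS topS(1)] topS(2) by blast
lemma pbotS: "pbot S L = Inl bA" using pbot_eq[OF poS botS(1)] botS(2) by blast

end

context vs begin

definition \<rho>L :: "'a + 'a \<Rightarrow> nat" where
  "\<rho>L x = (case x of Inl a \<Rightarrow> \<rho>A a | Inr u \<Rightarrow> \<rho>B u + rA - 2)"

lemma \<rho>L_Inl: "\<rho>L (Inl a) = \<rho>A a" unfolding \<rho>L_def by simp

lemma \<rho>L_g: "u \<in> B - {bB} \<Longrightarrow> \<rho>L (g u) = \<rho>B u + rA - 2"
proof (cases "u \<in> atB")
  case True
  have "\<psi> u \<in> coA" using psi_co True .
  then have "\<rho>A (\<psi> u) + 1 = rA" using coA_props by blast
  moreover have "\<rho>B u = 1" using atB_props True by blast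
  ultimately show ?thesis using g_at[OF True] rA3 unfolding \<rho>L_def by simp
next
  case False
  then show ?thesis using g_nat[OF False] unfolding \<rho>L_def by simp
qed

lemma rA_lt: "a \<in> A - {tA} \<Longrightarrow> \<rho>A a < rA"
  using rankA_strict[of a tA] tA by blast

lemma rB_pos: "u \<in> B - {bB} \<Longrightarrow> \<rho>B u \<ge> 1"
  using rankB_strict[of bB u] bB rB0 by fastforce

lemma coA_char: "a \<in> A - {tA} \<Longrightarrow> \<rho>A a + 1 = rA \<Longrightarrow> a \<in> coA"
proof -
  assume a: "a \<in> A - {tA}" "\<rho>A a + 1 = rA"
  have "covers A le a tA" unfolding covers_def
  proof (intro conjI ballI impI)
    fix z assume z: "z \<in> A" "le a z \<and> le z tA"
    show "z = a \<or> z = tA"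
    proof (rule ccontr)
      assume "\<not> (z = a \<or> z = tA)"
      then have "\<rho>A a < \<rho>A z" "\<rho>A z < rA" using rankA_strict[of a z] rankA_strict[of z tA] z a tA by auto
      then show False using a by simp
    qed
  qed (use a tA in auto)
  then show ?thesis unfolding coatoms_def by simp
qed

lemma atB_char: "u \<in> B - {bB} \<Longrightarrow> \<rho>B u = 1 \<Longrightarrow> u \<in> atB"
proof -
  assume u: "u \<in> B - {bB}" "\<rho>B u = 1"
  have "covers B le' bB u" unfolding covers_def
  proof (intro conjI ballI impI)
    fix z assume z: "z \<in> B" "le' bB z \<and> le' z u"
    show "z = bB \<or> z = u"
    proof (rule ccontr)
      assume "\<not> (z = bB \<or> z = u)"
      then have "\<rho>B bB < \<rho>B z" "\<rho>B z < \<rho>B u" using rankB_strict[of bB z] rankB_strict[of z u] z u bB by auto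
      then show False using u rB0 by simp
    qed
  qed (use u bB in auto)
  then show ?thesis unfolding atoms_def by simp
qed

lemma cov1:
  assumes ab: "a \<in> A - {tA}" "b \<in> A - {tA}" and c: "covers S L (Inl a) (Inl b)"
  shows "covers A le a b"
  unfolding covers_def
proof (intro conjI ballI impI)
  show "a \<in> A" "b \<in> A" using ab by auto
  show "le a b" using covers_mem[OF c] o1[OF ab] by blast
  show "a \<noteq> b" using covers_mem[OF c] by blast
  fix z assume z: "z \<in> A" "le a z \<and> le z b"
  have "z \<noteq> tA"
  proof
    assume "z = tA" then have "le tA b" using z by simp
    then have "b = tA" using po_antisym[OF poA, of b tA] tA ab by blast
    then show False using ab by blast
  qed
  then have zs: "z \<in> A - {tA}" using z by blast
  have "L (Inl a) (Inl z)" "L (Inl z) (Inl b)" using o1[OF ab(1) zs] o1[OF zs ab(2)] z by blast+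
  then have "Inl z = Inl a \<or> Inl z = Inl b" using c Inl_S[OF zs] unfolding covers_def by blast
  then show "z = a \<or> z = b" by simp
qed

lemma cov2:
  assumes uv: "u \<in> B - {bB}" "v \<in> B - {bB}" and c: "covers S L (g u) (g v)"
  shows "covers B le' u v"
  unfolding covers_def
proof (intro conjI ballI impI)
  show "u \<in> B" "v \<in> B" using uv by auto
  show "le' u v" using covers_mem[OF c] o2[OF uv] by blast
  show "u \<noteq> v" using covers_mem[OF c] by blast
  fix z assume z: "z \<in> B" "le' u z \<and> le' z v"
  have "z \<noteq> bB"
  proof
    assume "z = bB" then have "le' u bB" using z by simp
    then have "u = bB" using po_antisym[OF poB, of u bB] bB uv by blast
    then show False using uv by blast
  qed
  then have zs: "z \<in> B - {bB}" using z by blast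
  have "L (g u) (g z)" "L (g z) (g v)" using o2[OF uv(1) zs] o2[OF zs uv(2)] z by blast+
  then have "g z = g u \<or> g z = g v" using c g_S[OF zs] unfolding covers_def by blast
  then show "z = u \<or> z = v" using g_inj' by blast
qed

lemma cov_cases:
  assumes c: "covers S L x y"
  shows "(\<exists>a b. a \<in> A - {tA} \<and> b \<in> A - {tA} \<and> x = Inl a \<and> y = Inl b \<and> covers A le a b)
       \<or> (\<exists>u v. u \<in> B - {bB} \<and> v \<in> B - {bB} \<and> x = g u \<and> y = g v \<and> covers B le' u v)"
proof -
  have "Phi x y" using covers_mem[OF c] L_Phi by blast
  then show ?thesis
  proof (cases rule: PhiE)
    case (c1 a b)
    then have "covers A le a b" using cov1 c by blast
    then show ?thesis using c1 by blast
  next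
    case (c2 u v)
    then have "covers B le' u v" using cov2 c by blast
    then show ?thesis using c2 by blast
  next
    case (c3 a c v)
    have cs: "c \<in> A - {tA}" using coA_sub c3(2) .
    have ps: "\<phi> c \<in> B - {bB}" using atB_sub phi_at c3(2) by blast
    have gp: "g (\<phi> c) = Inl c" using g_phi c3(2) .
    have l1: "L x (Inl c)" using o1[OF c3(1) cs] c3 by simp
    have l2: "L (Inl c) y" using o2[OF ps c3(3)] c3 gp by simp
    have "Inl c = x \<or> Inl c = y" using c Inl_S[OF cs] l1 l2 unfolding covers_def by blast
    then show ?thesis
    proof
      assume "Inl c = x"
      then have "x = g (\<phi> c)" using gp by simp
      then have "covers B le' (\<phi> c) v" using cov2[OF ps c3(3)] c c3 by simp
      then show ?thesis using \<open>x = g (\<phi> c)\<close> c3 ps by blast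
    next
      assume "Inl c = y"
      then have "covers A le a c" using cov1[OF c3(1) cs] c c3 by simp
      then show ?thesis using \<open>Inl c = y\<close> c3 cs by blast
    qed
  qed
qed

lemma rankS: "rank_fun S L \<rho>L"
  unfolding rank_fun_def
proof (intro conjI allI impI)
  show "\<rho>L (pbot S L) = 0" using pbotS \<rho>L_Inl rA0 by simp
  fix x y assume c: "covers S L x y"
  from cov_cases[OF c] show "\<rho>L y = \<rho>L x + 1"
  proof
    assume "\<exists>a b. a \<in> A - {tA} \<and> b \<in> A - {tA} \<and> x = Inl a \<and> y = Inl b \<and> covers A le a b"
    then obtain a b where "x = Inl a" "y = Inl b" "covers A le a b" by blast
    then show ?thesis using rkA_cov \<rho>L_Inl by simp
  next
    assume "\<exists>u v. u \<in> B - {bB} \<and> v \<in> B - {bB} \<and> x = g u \<and> y = g v \<and> covers B le' u v"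
    then obtain u v where uv: "u \<in> B - {bB}" "v \<in> B - {bB}" "x = g u" "y = g v" "covers B le' u v" by blast
    then have "\<rho>B v = \<rho>B u + 1" using rkB_cov by blast
    then show ?thesis using \<rho>L_g[OF uv(1)] \<rho>L_g[OF uv(2)] uv rA3 by simp
  qed
qed

lemma rank_topS: "\<rho>L (ptop S L) = \<rho>B tB + rA - 2"
  using ptopS \<rho>L_g[OF tB_sub] g_tB by simp

lemma atomsS: "atoms S L = Inl ` atoms A le"
proof (intro equalityI subsetI)
  fix y :: "'a + 'a" assume "y \<in> atoms S L"
  then have c: "covers S L (Inl bA) y" unfolding atoms_def using pbotS by simp
  from cov_cases[OF c] show "y \<in> Inl ` atoms A le"
  proof
    assume "\<exists>a b. a \<in> A - {tA} \<and> b \<in> A - {tA} \<and> Inl bA = Inl a \<and> y = Inl b \<and> covers A le a b"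
    then obtain b where "y = Inl b" "covers A le bA b" by blast
    then show ?thesis unfolding atoms_def by simp
  next
    assume "\<exists>u v. u \<in> B - {bB} \<and> v \<in> B - {bB} \<and> Inl bA = g u \<and> y = g v \<and> covers B le' u v"
    then obtain u where u: "u \<in> B - {bB}" "Inl bA = g u" by blast
    then have "bA \<in> coA" using Inl_g[OF bA_sub] by blast
    then have "\<rho>A bA + 1 = rA" using coA_props by blast
    then show ?thesis using rA0 rA3 by simp
  qed
next
  fix y :: "'a + 'a" assume "y \<in> Inl ` atoms A le"
  then obtain a where a: "a \<in> atoms A le" "y = Inl a" by blast
  have aA: "a \<in> A - {tA}" using atA_props[OF a(1)] by blast
  have ca: "covers A le bA a" using a(1) unfolding atoms_def by simp
  have "covers S L (Inl bA) (Inl a)" unfolding covers_def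
  proof (intro conjI ballI impI)
    show "Inl bA \<in> S" "Inl a \<in> S" using Inl_S bA_sub aA by auto
    show "L (Inl bA) (Inl a)" using o1[OF bA_sub aA] covers_mem[OF ca] by blast
    show "Inl bA \<noteq> Inl a" using covers_mem[OF ca] by simp
    fix z assume z: "z \<in> S" "L (Inl bA) z \<and> L z (Inl a)"
    then obtain z' where z': "z' \<in> A - {tA}" "z = Inl z'" using o3 by blast
    then have "le bA z'" "le z' a" using o1[OF bA_sub z'(1)] o1[OF z'(1) aA] z by blast+
    then have "z' = bA \<or> z' = a" using ca z' unfolding covers_def by blast
    then show "z = Inl bA \<or> z = Inl a" using z' by blast
  qed
  then show "y \<in> atoms S L" unfolding atoms_def using pbotS a by simp
qed

lemma coatomsS: "coatoms S L = Inr ` coatoms B le'"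
proof (intro equalityI subsetI)
  fix x :: "'a + 'a" assume "x \<in> coatoms S L"
  then have c: "covers S L x (Inr tB)" unfolding coatoms_def using ptopS by simp
  from cov_cases[OF c] show "x \<in> Inr ` coatoms B le'"
  proof
    assume "\<exists>a b. a \<in> A - {tA} \<and> b \<in> A - {tA} \<and> x = Inl a \<and> Inr tB = Inl b \<and> covers A le a b"
    then show ?thesis by blast
  next
    assume "\<exists>u v. u \<in> B - {bB} \<and> v \<in> B - {bB} \<and> x = g u \<and> Inr tB = g v \<and> covers B le' u v"
    then obtain u v where uv: "u \<in> B - {bB}" "x = g u" "Inr tB = g v" "covers B le' u v" by blast
    have "v = tB" using g_Inr[of v tB] uv(3) by simp
    then have cu: "u \<in> coatoms B le'" using uv unfolding coatoms_def by simp
    then have "x = Inr u" using coB_props[OF cu] g_nat uv by simp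
    then show ?thesis using cu by blast
  qed
next
  fix x :: "'a + 'a" assume "x \<in> Inr ` coatoms B le'"
  then obtain u where u: "u \<in> coatoms B le'" "x = Inr u" by blast
  note up = coB_props[OF u(1)]
  have us: "u \<in> B - {bB}" using up by blast
  have gu: "g u = Inr u" using g_nat up by blast
  have cv: "covers B le' u tB" using up by blast
  have "covers S L (g u) (g tB)" unfolding covers_def
  proof (intro conjI ballI impI)
    show "g u \<in> S" "g tB \<in> S" using g_S us tB_sub by auto
    show "L (g u) (g tB)" using o2[OF us tB_sub] covers_mem[OF cv] by blast
    show "g u \<noteq> g tB" using covers_mem[OF cv] g_inj' by blast
    fix z assume z: "z \<in> S" "L (g u) z \<and> L z (g tB)"
    then obtain z' where z': "z' \<in> B - {bB}" "z = g z'" using o4 by blast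
    then have "le' u z'" "le' z' tB" using o2[OF us z'(1)] o2[OF z'(1) tB_sub] z by blast+
    then have "z' = u \<or> z' = tB" using cv z' unfolding covers_def by blast
    then show "z = g u \<or> z = g tB" using z' by blast
  qed
  then show "x \<in> coatoms S L" unfolding coatoms_def using ptopS u gu g_tB by simp
qed

lemma card_atomsS: "card (atoms S L) = card (atoms A le)"
  using atomsS card_image[of Inl] by (simp add: inj_on_def)

lemma card_coatomsS: "card (coatoms S L) = card (coatoms B le')"
  using coatomsS card_image[of Inr] by (simp add: inj_on_def)

lemma card_S: "card S = card A + card B - 4"
proof -
  have d: "(Inl ` (A - {tA}) :: ('a + 'a) set) \<inter> Inr ` (B - {bB} - atB) = {}" by blast
  have f1: "finite (Inl ` (A - {tA}) :: ('a + 'a) set)" using finA by simp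
  have f2: "finite (Inr ` (B - {bB} - atB) :: ('a + 'a) set)" using finB by simp
  have "card S = card (Inl ` (A - {tA}) :: ('a + 'a) set) + card (Inr ` (B - {bB} - atB) :: ('a + 'a) set)"
    unfolding S_def using card_Un_disjoint[OF f1 f2 d] by simp
  also have "\<dots> = card (A - {tA}) + card (B - {bB} - atB)"
    using card_image[of "Inl :: 'a \<Rightarrow> 'a + 'a" "A - {tA}"] card_image[of "Inr :: 'a \<Rightarrow> 'a + 'a" "B - {bB} - atB"] by (simp add: inj_on_def)
  also have "card (A - {tA}) = card A - 1" using tA(1) finA by simp
  also have "card (B - {bB} - atB) = card (B - {bB}) - card atB"
    using atB_sub finB by (intro card_Diff_subset) (auto intro: finite_subset)
  also have "card (B - {bB}) = card B - 1" using bB(1) finB by simp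
  finally have e: "card S = (card A - 1) + (card B - 1 - 2)" using cB by simp
  have "card A \<ge> 1" using tA(1) finA card_0_eq[of A] by fastforce
  moreover have "card (B - {bB}) \<ge> 2" using card_mono[of "B - {bB}" atB] cB atB_sub finB by fastforce
  then have "card B \<ge> 3" using \<open>card (B - {bB}) = card B - 1\<close> by simp
  ultimately show ?thesis using e by simp
qed

lemma lowset: "{x\<in>S. \<rho>L x \<le> rA - 1} = Inl ` (A - {tA})"
proof (intro equalityI subsetI)
  fix x :: "'a + 'a" assume x: "x \<in> {x\<in>S. \<rho>L x \<le> rA - 1}"
  then have xS: "x \<in> S" and xr: "\<rho>L x \<le> rA - 1" by auto
  from S_cases[OF xS] show "x \<in> Inl ` (A - {tA})"
  proof
    assume "\<exists>u\<in>B - {bB}. x = g u"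
    then obtain u where u: "u \<in> B - {bB}" "x = g u" by blast
    show ?thesis
    proof (cases "u \<in> atB")
      case True
      then show ?thesis using u g_at psi_co coA_sub by auto
    next
      case False
      then have "\<rho>B u \<noteq> 1" using atB_char u by blast
      then have "\<rho>B u \<ge> 2" using rB_pos[OF u(1)] by simp
      then show ?thesis using \<rho>L_g[OF u(1)] u xr rA3 by simp
    qed
  qed blast
next
  fix x :: "'a + 'a" assume "x \<in> Inl ` (A - {tA})"
  then obtain a where a: "a \<in> A - {tA}" "x = Inl a" by blast
  then show "x \<in> {x\<in>S. \<rho>L x \<le> rA - 1}" using rA_lt[OF a(1)] Inl_S \<rho>L_Inl by auto
qed

lemma upset: "{x\<in>S. \<rho>L x \<ge> rA - 1} = g ` (B - {bB})"
proof (intro equalityI subsetI)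
  fix x :: "'a + 'a" assume x: "x \<in> {x\<in>S. \<rho>L x \<ge> rA - 1}"
  then have xS: "x \<in> S" and xr: "\<rho>L x \<ge> rA - 1" by auto
  from S_cases[OF xS] show "x \<in> g ` (B - {bB})"
  proof
    assume "\<exists>a\<in>A - {tA}. x = Inl a"
    then obtain a where a: "a \<in> A - {tA}" "x = Inl a" by blast
    then have "\<rho>A a + 1 = rA" using rA_lt[OF a(1)] xr \<rho>L_Inl by simp
    then have ac: "a \<in> coA" using coA_char a by blast
    then have "x = g (\<phi> a)" using g_phi a by simp
    then show ?thesis using phi_at ac atB_sub by blast
  qed blast
next
  fix x :: "'a + 'a" assume "x \<in> g ` (B - {bB})"
  then obtain u where u: "u \<in> B - {bB}" "x = g u" by blast
  then show "x \<in> {x\<in>S. \<rho>L x \<ge> rA - 1}" using rB_pos[OF u(1)] \<rho>L_g[OF u(1)] g_S rA3 by auto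
qed

lemma levelset: "{x\<in>S. \<rho>L x = rA - 1} = Inl ` coA"
proof (intro equalityI subsetI)
  fix x :: "'a + 'a" assume x: "x \<in> {x\<in>S. \<rho>L x = rA - 1}"
  then have "x \<in> {x\<in>S. \<rho>L x \<le> rA - 1}" by simp
  then obtain a where a: "a \<in> A - {tA}" "x = Inl a" using lowset by blast
  then have "\<rho>A a + 1 = rA" using x \<rho>L_Inl rA3 by simp
  then have "a \<in> coA" using coA_char a by blast
  then show "x \<in> Inl ` coA" using a by blast
next
  fix x :: "'a + 'a" assume "x \<in> Inl ` coA"
  then obtain c where c: "c \<in> coA" "x = Inl c" by blast
  then show "x \<in> {x\<in>S. \<rho>L x = rA - 1}" using coA_props[OF c(1)] coA_sub Inl_S \<rho>L_Inl by auto
qed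

lemma neckS: "\<exists>x y. is_neck S L \<rho>L x y \<and> \<rho>L x = rA - 1"
proof -
  obtain c1 c2 where cc: "coA = {c1, c2}" "c1 \<noteq> c2" using cA card_2_iff by metis
  have c1: "c1 \<in> coA" and c2: "c2 \<in> coA" using cc by auto
  have r1: "\<rho>L (Inl c1) = rA - 1" "\<rho>L (Inl c2) = rA - 1"
    using coA_props[OF c1] coA_props[OF c2] \<rho>L_Inl by auto
  have na: "Inl c \<notin> atoms S L" if "c \<in> coA" for c
  proof
    assume "Inl c \<in> atoms S L"
    then have "c \<in> atoms A le" using atomsS by auto
    then have "\<rho>A c = 1" using atA_props by blast
    then show False using coA_props[OF that] rA3 by simp
  qed
  have nc: "Inl c \<notin> coatoms S L" for c using coatomsS by auto
  have "{x\<in>S. \<rho>L x = \<rho>L (Inl c1)} = {Inl c1, Inl c2}" using levelset r1 cc by simp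
  then have "is_neck S L \<rho>L (Inl c1) (Inl c2)"
    using is_neckI[of "Inl c1" S "Inl c2" \<rho>L L] Inl_S coA_sub c1 c2 cc(2) r1 na[OF c1] na[OF c2] nc
    by simp
  then show ?thesis using r1 by blast
qed

lemma no_low_neck:
  assumes n: "is_neck S L \<rho>L x y" and r: "\<rho>L x < rA - 1"
  shows "\<exists>a b. is_neck A le \<rho>A a b"
proof -
  obtain xS: "x \<in> S" and yS: "y \<in> S" and xy: "x \<noteq> y" "\<rho>L x = \<rho>L y"
    and lev: "{z\<in>S. \<rho>L z = \<rho>L x} = {x, y}"
    and xn: "x \<notin> atoms S L" "x \<notin> coatoms S L" "y \<notin> atoms S L" "y \<notin> coatoms S L"
    using is_neckE[OF n] by blast
  have "x \<in> {x\<in>S. \<rho>L x \<le> rA - 1}" using xS r by simp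
  then obtain a where a: "a \<in> A - {tA}" "x = Inl a" using lowset by blast
  have "y \<in> {x\<in>S. \<rho>L x \<le> rA - 1}" using yS r xy by simp
  then obtain b where b: "b \<in> A - {tA}" "y = Inl b" using lowset by blast
  have ra: "\<rho>A a = \<rho>L x" "\<rho>A b = \<rho>L x" using a b xy \<rho>L_Inl by auto
  have "{z\<in>A. \<rho>A z = \<rho>A a} = {a, b}"
  proof (intro equalityI subsetI)
    fix z assume z: "z \<in> {z\<in>A. \<rho>A z = \<rho>A a}"
    have "z \<noteq> tA" using z ra r by auto
    then have zs: "z \<in> A - {tA}" using z by blast
    have "Inl z \<in> {z\<in>S. \<rho>L z = \<rho>L x}" using Inl_S[OF zs] z ra \<rho>L_Inl by simp
    then have "Inl z \<in> {x, y}" using lev by simp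
    then show "z \<in> {a, b}" using a b by auto
  next
    fix z assume "z \<in> {a, b}"
    then show "z \<in> {z\<in>A. \<rho>A z = \<rho>A a}" using a b ra by auto
  qed
  moreover have "a \<notin> atoms A le" "b \<notin> atoms A le" using xn atomsS a b by auto
  moreover have "a \<notin> coA" "b \<notin> coA" using coA_props ra r by fastforce+
  moreover have "a \<noteq> b" using xy a b by simp
  ultimately have "is_neck A le \<rho>A a b" using is_neckI[of a A b \<rho>A] a b ra by simp
  then show ?thesis by blast
qed

end

context vs begin
lemma finS: "finite S" unfolding S_def using finA finB by simp
lemma botS': "Inl bA \<in> S" "\<forall>x\<in>S. L (Inl bA) x" using botS by auto
lemma topS': "Inr tB \<in> S" "\<forall>x\<in>S. L x (Inr tB)" using topS by auto
lemma S_eq: "fst (vsum2 A le B le' \<phi>) = S" "snd (vsum2 A le B le' \<phi>) = L"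
  using vsum2_eq by auto
end

lemma isoh_intro:
  assumes poA: "po A le" and poB: "po B le'" and into: "\<forall>x\<in>A. f x \<in> B"
    and onto: "\<forall>y\<in>B. \<exists>x\<in>A. y = f x" and ord: "\<forall>x\<in>A. \<forall>y\<in>A. le x y \<longleftrightarrow> le' (f x) (f y)"
  shows "isoh f A le B le'"
proof -
  have "inj_on f A"
  proof (rule inj_onI)
    fix x y assume xy: "x \<in> A" "y \<in> A" "f x = f y"
    have "le' (f x) (f y)" "le' (f y) (f x)" using po_refl[OF poB] into xy by auto
    then have "le x y" "le y x" using ord xy by auto
    then show "x = y" using po_antisym[OF poA] xy by blast
  qed
  moreover have "f ` A = B" using into onto by blast
  ultimately show ?thesis unfolding isoh_def bij_betw_def using ord by blast
qed

lemma is_neck_cong: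
  assumes eq: "\<forall>z\<in>A. \<rho> z = \<rho>' z" and n: "is_neck A le \<rho> x y"
  shows "is_neck A le \<rho>' x y"
proof -
  obtain xS: "x \<in> A" and yS: "y \<in> A" and xy: "x \<noteq> y" "\<rho> x = \<rho> y"
    and lev: "{z\<in>A. \<rho> z = \<rho> x} = {x, y}"
    and xn: "x \<notin> atoms A le" "x \<notin> coatoms A le" "y \<notin> atoms A le" "y \<notin> coatoms A le"
    using is_neckE[OF n] by blast
  have "{z\<in>A. \<rho>' z = \<rho>' x} = {z\<in>A. \<rho> z = \<rho> x}" using eq xS by auto
  then have lev': "{z\<in>A. \<rho>' z = \<rho>' x} = {x, y}" using lev by simp
  have "\<rho>' x = \<rho>' y" using eq xS yS xy by simp
  then show ?thesis using is_neckI[of x A y \<rho>' le] xS yS xy(1) lev' xn by blast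
qed

lemma rank_le:
  assumes V1: "vs A1 le1 B1 le1' \<phi>1 \<rho>A1 \<rho>B1" and V2: "vs A2 le2 B2 le2' \<phi>2 \<rho>A2 \<rho>B2"
    and nn2: "\<not> (\<exists>a b. is_neck A2 le2 \<rho>A2 a b)"
    and h: "isoh h (fst (vsum2 A1 le1 B1 le1' \<phi>1)) (snd (vsum2 A1 le1 B1 le1' \<phi>1))
                   (fst (vsum2 A2 le2 B2 le2' \<phi>2)) (snd (vsum2 A2 le2 B2 le2' \<phi>2))"
  shows "\<rho>A2 (ptop A2 le2) \<le> \<rho>A1 (ptop A1 le1)
       \<and> (\<forall>z\<in>vs.S A1 le1 B1 le1'. vs.\<rho>L A1 le1 \<rho>A1 \<rho>B1 z = vs.\<rho>L A2 le2 \<rho>A2 \<rho>B2 (h z))"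
proof -
  interpret V1: vs A1 le1 B1 le1' \<phi>1 \<rho>A1 \<rho>B1 by (rule V1)
  interpret V2: vs A2 le2 B2 le2' \<phi>2 \<rho>A2 \<rho>B2 by (rule V2)
  have h: "isoh h V1.S V1.L V2.S V2.L" using h V1.S_eq V2.S_eq by simp
  have rk: "rank_fun V1.S V1.L (V2.\<rho>L \<circ> h)"
    using isoh_rank[OF h V2.poS V1.botS'(1) V1.botS'(2) V2.rankS] .
  have eq: "\<forall>z\<in>V1.S. V1.\<rho>L z = (V2.\<rho>L \<circ> h) z"
    using rank_unique[OF V1.finS V1.poS V1.botS'(1) V1.botS'(2) V1.rankS rk] by blast
  obtain x y where n1: "is_neck V1.S V1.L V1.\<rho>L x y" and r1: "V1.\<rho>L x = V1.rA - 1"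
    using V1.neckS by blast
  have n1': "is_neck V1.S V1.L (V2.\<rho>L \<circ> h) x y" using is_neck_cong[OF eq n1] .
  have n2: "is_neck V2.S V2.L V2.\<rho>L (h x) (h y)"
    using isoh_neck[OF h V2.poS V1.botS'(1) V1.botS'(2) V1.topS'(1) V1.topS'(2) n1'] .
  have xS: "x \<in> V1.S" using n1 unfolding is_neck_def by blast
  have r2: "V2.\<rho>L (h x) = V1.rA - 1" using eq xS r1 by simp
  have "\<not> (V2.\<rho>L (h x) < V2.rA - 1)"
  proof
    assume "V2.\<rho>L (h x) < V2.rA - 1"
    then show False using V2.no_low_neck[OF n2] nn2 by blast
  qed
  then have "V2.rA - 1 \<le> V1.rA - 1" using r2 by simp
  then have "V2.rA \<le> V1.rA" using V1.rA3 V2.rA3 by simp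
  then show ?thesis using eq by simp
qed

lemma sum_inj:
  assumes V1: "vs A1 le1 B1 le1' \<phi>1 \<rho>A1 \<rho>B1" and V2: "vs A2 le2 B2 le2' \<phi>2 \<rho>A2 \<rho>B2"
    and nn1: "\<not> (\<exists>a b. is_neck A1 le1 \<rho>A1 a b)"
    and nn2: "\<not> (\<exists>a b. is_neck A2 le2 \<rho>A2 a b)"
    and h0: "isoh h (fst (vsum2 A1 le1 B1 le1' \<phi>1)) (snd (vsum2 A1 le1 B1 le1' \<phi>1))
                   (fst (vsum2 A2 le2 B2 le2' \<phi>2)) (snd (vsum2 A2 le2 B2 le2' \<phi>2))"
  shows "iso A1 le1 A2 le2 \<and> iso B1 le1' B2 le2'"
proof -
  interpret V1: vs A1 le1 B1 le1' \<phi>1 \<rho>A1 \<rho>B1 by (rule V1)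
  interpret V2: vs A2 le2 B2 le2' \<phi>2 \<rho>A2 \<rho>B2 by (rule V2)
  have h: "isoh h V1.S V1.L V2.S V2.L" using h0 V1.S_eq V2.S_eq by simp
  have hi0: "isoh (inv_into V1.S h) (fst (vsum2 A2 le2 B2 le2' \<phi>2)) (snd (vsum2 A2 le2 B2 le2' \<phi>2))
       (fst (vsum2 A1 le1 B1 le1' \<phi>1)) (snd (vsum2 A1 le1 B1 le1' \<phi>1))"
    using isoh_inv[OF h] V1.S_eq V2.S_eq by simp
  have le1: "V2.rA \<le> V1.rA" and eq: "\<forall>z\<in>V1.S. V1.\<rho>L z = V2.\<rho>L (h z)"
    using rank_le[OF V1 V2 nn2 h0] by auto
  have "V1.rA \<le> V2.rA" using rank_le[OF V2 V1 nn1 hi0] by blast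
  then have req: "V1.rA = V2.rA" using le1 by simp
  define r where "r = V1.rA"
  have hS: "\<And>z. z \<in> V1.S \<Longrightarrow> h z \<in> V2.S" using isoh_mem[OF h] .
  have hsurj: "\<And>w. w \<in> V2.S \<Longrightarrow> \<exists>z\<in>V1.S. w = h z" using isoh_surj[OF h] .
  have hle: "\<And>x y. x \<in> V1.S \<Longrightarrow> y \<in> V1.S \<Longrightarrow> V1.L x y \<longleftrightarrow> V2.L (h x) (h y)"
    using isoh_le[OF h] .
  have low12: "\<exists>b\<in>A2 - {V2.tA}. h (Inl a) = Inl b" if a: "a \<in> A1 - {V1.tA}" for a
  proof -
    have "Inl a \<in> V1.S" using V1.Inl_S[OF a] .
    moreover have "V1.\<rho>L (Inl a) \<le> r - 1" using V1.rA_lt[OF a] V1.\<rho>L_Inl r_def by simp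
    ultimately have "h (Inl a) \<in> {x\<in>V2.S. V2.\<rho>L x \<le> V2.rA - 1}" using hS eq req r_def by auto
    then show ?thesis using V2.lowset by blast
  qed
  have low21: "\<exists>a\<in>A1 - {V1.tA}. h (Inl a) = Inl b" if b: "b \<in> A2 - {V2.tA}" for b
  proof -
    obtain z where z: "z \<in> V1.S" "Inl b = h z" using hsurj[OF V2.Inl_S[OF b]] by blast
    have "V1.\<rho>L z = V2.\<rho>L (Inl b)" using eq z by simp
    also have "\<dots> \<le> r - 1" using V2.rA_lt[OF b] V2.\<rho>L_Inl r_def req by simp
    finally have "z \<in> {x\<in>V1.S. V1.\<rho>L x \<le> V1.rA - 1}" using z r_def by simp
    then obtain a where a: "a \<in> A1 - {V1.tA}" "z = Inl a" using V1.lowset by blast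
    then have "h (Inl a) = Inl b" using z by simp
    then show ?thesis using a by blast
  qed
  define k where "k a = (if a = V1.tA then V2.tA else projl (h (Inl a)))" for a
  have k1: "k a \<in> A2 - {V2.tA} \<and> h (Inl a) = Inl (k a)" if a: "a \<in> A1 - {V1.tA}" for a
  proof -
    obtain b where b: "b \<in> A2 - {V2.tA}" "h (Inl a) = Inl b" using low12[OF a] by blast
    have "k a = b" unfolding k_def using a b by simp
    then show ?thesis using b by simp
  qed
  have kt: "k V1.tA = V2.tA" unfolding k_def by simp
  have isoA: "isoh k A1 le1 A2 le2"
  proof (rule isoh_intro[OF V1.poA V2.poA])
    show "\<forall>x\<in>A1. k x \<in> A2"
    proof
      fix x assume "x \<in> A1"
      then show "k x \<in> A2" using k1[of x] kt V2.tA(1) by (cases "x = V1.tA") auto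
    qed
    show "\<forall>y\<in>A2. \<exists>x\<in>A1. y = k x"
    proof
      fix y assume y: "y \<in> A2"
      show "\<exists>x\<in>A1. y = k x"
      proof (cases "y = V2.tA")
        case True then show ?thesis using kt V1.tA(1) by metis
      next
        case False
        then have ys: "y \<in> A2 - {V2.tA}" using y by blast
        then obtain a where a: "a \<in> A1 - {V1.tA}" "h (Inl a) = Inl y" using low21 by blast
        then have "k a = y" using k1[OF a(1)] by simp
        then show ?thesis using a by blast
      qed
    qed
    show "\<forall>x\<in>A1. \<forall>y\<in>A1. le1 x y \<longleftrightarrow> le2 (k x) (k y)"
    proof (intro ballI)
      fix x y assume x: "x \<in> A1" and y: "y \<in> A1"
      show "le1 x y \<longleftrightarrow> le2 (k x) (k y)"
      proof (cases "y = V1.tA")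
        case True
        have "k x \<in> A2" using k1[of x] kt V2.tA(1) x by (cases "x = V1.tA") auto
        then show ?thesis using True kt V1.tA(2)[OF x] V2.tA(2) by simp
      next
        case yF: False
        then have ys: "y \<in> A1 - {V1.tA}" using y by blast
        note ky = k1[OF ys]
        show ?thesis
        proof (cases "x = V1.tA")
          case True
          have "\<not> le1 V1.tA y" using po_antisym[OF V1.poA, of y V1.tA] V1.tA y yF by blast
          moreover have "\<not> le2 V2.tA (k y)" using po_antisym[OF V2.poA, of "k y" V2.tA] V2.tA ky by blast
          ultimately show ?thesis using True kt by simp
        next
          case False
          then have xs: "x \<in> A1 - {V1.tA}" using x by blast
          note kx = k1[OF xs]
          have "le1 x y \<longleftrightarrow> V1.L (Inl x) (Inl y)" using V1.o1[OF xs ys] by simp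
          also have "\<dots> \<longleftrightarrow> V2.L (h (Inl x)) (h (Inl y))" using hle V1.Inl_S xs ys by blast
          also have "\<dots> \<longleftrightarrow> le2 (k x) (k y)" using kx ky V2.o1 by simp
          finally show ?thesis .
        qed
      qed
    qed
  qed
  have up12: "\<exists>v\<in>B2 - {V2.bB}. h (V1.g u) = V2.g v" if u: "u \<in> B1 - {V1.bB}" for u
  proof -
    have "V1.g u \<in> V1.S" using V1.g_S[OF u] .
    moreover have "V1.\<rho>L (V1.g u) \<ge> r - 1" using V1.rB_pos[OF u] V1.\<rho>L_g[OF u] r_def V1.rA3 by simp
    ultimately have "h (V1.g u) \<in> {x\<in>V2.S. V2.\<rho>L x \<ge> V2.rA - 1}" using hS eq req r_def by auto
    then show ?thesis using V2.upset by blast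
  qed
  have up21: "\<exists>u\<in>B1 - {V1.bB}. h (V1.g u) = V2.g v" if v: "v \<in> B2 - {V2.bB}" for v
  proof -
    obtain z where z: "z \<in> V1.S" "V2.g v = h z" using hsurj[OF V2.g_S[OF v]] by blast
    have "V1.\<rho>L z = V2.\<rho>L (V2.g v)" using eq z by simp
    moreover have "V2.\<rho>L (V2.g v) \<ge> r - 1" using V2.rB_pos[OF v] V2.\<rho>L_g[OF v] r_def req V2.rA3 by simp
    ultimately have "z \<in> {x\<in>V1.S. V1.\<rho>L x \<ge> V1.rA - 1}" using z r_def by simp
    then obtain u where u: "u \<in> B1 - {V1.bB}" "z = V1.g u" using V1.upset by blast
    then have "h (V1.g u) = V2.g v" using z by simp
    then show ?thesis using u by blast
  qed
  define k' where "k' u = (if u = V1.bB then V2.bB else (SOME v. v \<in> B2 - {V2.bB} \<and> h (V1.g u) = V2.g v))" for u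
  have k'1: "k' u \<in> B2 - {V2.bB} \<and> h (V1.g u) = V2.g (k' u)" if u: "u \<in> B1 - {V1.bB}" for u
  proof -
    have ex: "\<exists>v. v \<in> B2 - {V2.bB} \<and> h (V1.g u) = V2.g v" using up12[OF u] by blast
    have ke: "k' u = (SOME v. v \<in> B2 - {V2.bB} \<and> h (V1.g u) = V2.g v)" unfolding k'_def using u by simp
    show ?thesis unfolding ke by (rule someI_ex[OF ex])
  qed
  have kb: "k' V1.bB = V2.bB" unfolding k'_def by simp
  have isoB: "isoh k' B1 le1' B2 le2'"
  proof (rule isoh_intro[OF V1.poB V2.poB])
    show "\<forall>x\<in>B1. k' x \<in> B2"
    proof
      fix x assume "x \<in> B1"
      then show "k' x \<in> B2" using k'1[of x] kb V2.bB(1) by (cases "x = V1.bB") auto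
    qed
    show "\<forall>y\<in>B2. \<exists>x\<in>B1. y = k' x"
    proof
      fix y assume y: "y \<in> B2"
      show "\<exists>x\<in>B1. y = k' x"
      proof (cases "y = V2.bB")
        case True then show ?thesis using kb V1.bB(1) by metis
      next
        case False
        then have ys: "y \<in> B2 - {V2.bB}" using y by blast
        then obtain u where u: "u \<in> B1 - {V1.bB}" "h (V1.g u) = V2.g y" using up21 by blast
        then have "V2.g (k' u) = V2.g y" using k'1[OF u(1)] by simp
        then have "k' u = y" using V2.g_inj' by blast
        then show ?thesis using u by blast
      qed
    qed
    show "\<forall>x\<in>B1. \<forall>y\<in>B1. le1' x y \<longleftrightarrow> le2' (k' x) (k' y)"
    proof (intro ballI)
      fix x y assume x: "x \<in> B1" and y: "y \<in> B1"
      show "le1' x y \<longleftrightarrow> le2' (k' x) (k' y)"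
      proof (cases "x = V1.bB")
        case True
        have "k' y \<in> B2" using k'1[of y] kb V2.bB(1) y by (cases "y = V1.bB") auto
        then show ?thesis using True kb V1.bB(2)[OF y] V2.bB(2) by simp
      next
        case xF: False
        then have xs: "x \<in> B1 - {V1.bB}" using x by blast
        note kx = k'1[OF xs]
        show ?thesis
        proof (cases "y = V1.bB")
          case True
          have "\<not> le1' x V1.bB" using po_antisym[OF V1.poB, of x V1.bB] V1.bB x xF by blast
          moreover have "\<not> le2' (k' x) V2.bB" using po_antisym[OF V2.poB, of "k' x" V2.bB] V2.bB kx by blast
          ultimately show ?thesis using True kb by simp
        next
          case False
          then have ys: "y \<in> B1 - {V1.bB}" using y by blast
          note ky = k'1[OF ys]
          have "le1' x y \<longleftrightarrow> V1.L (V1.g x) (V1.g y)" using V1.o2[OF xs ys] by simp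
          also have "\<dots> \<longleftrightarrow> V2.L (h (V1.g x)) (h (V1.g y))" using hle V1.g_S xs ys by blast
          also have "\<dots> \<longleftrightarrow> le2' (k' x) (k' y)" using kx ky V2.o2 by simp
          finally show ?thesis .
        qed
      qed
    qed
  qed
  show ?thesis using isoA isoB iso_isoh by blast
qed

lemma piece_not_sum:
  assumes V: "vs A le B le' \<phi> \<rho>A \<rho>B" and fin0: "finite A0" and pc: "is_piece A0 le0"
    and h0: "isoh h A0 le0 (fst (vsum2 A le B le' \<phi>)) (snd (vsum2 A le B le' \<phi>))"
  shows False
proof -
  interpret V: vs A le B le' \<phi> \<rho>A \<rho>B by (rule V)
  have h: "isoh h A0 le0 V.S V.L" using h0 V.S_eq by simp
  have lat0: "is_lattice A0 le0" using pc unfolding is_piece_def by blast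
  obtain \<rho>0 where rk0: "rank_fun A0 le0 \<rho>0" and nn: "\<not> (\<exists>a b. is_neck A0 le0 \<rho>0 a b)"
    using pc unfolding is_piece_def by blast
  have po0: "po A0 le0" using lattice_po[OF lat0] .
  note b0 = pbot_props[OF fin0 lat0]
  have b0': "pbot A0 le0 \<in> A0" "\<forall>x\<in>A0. le0 (pbot A0 le0) x" using b0 by auto
  have rk: "rank_fun A0 le0 (V.\<rho>L \<circ> h)" using isoh_rank[OF h V.poS b0'(1) b0'(2) V.rankS] .
  have eq: "\<forall>z\<in>A0. \<rho>0 z = (V.\<rho>L \<circ> h) z"
    using rank_unique[OF fin0 po0 b0'(1) b0'(2) rk0 rk] by blast
  have k: "isoh (inv_into A0 h) V.S V.L A0 le0" using isoh_inv[OF h] .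
  have eq2: "\<forall>z\<in>V.S. V.\<rho>L z = (\<rho>0 \<circ> inv_into A0 h) z"
  proof
    fix z assume z: "z \<in> V.S"
    have m: "inv_into A0 h z \<in> A0" using isoh_mem[OF k z] .
    have "h (inv_into A0 h z) = z" using h z unfolding isoh_def bij_betw_def by (simp add: f_inv_into_f)
    then show "V.\<rho>L z = (\<rho>0 \<circ> inv_into A0 h) z" using eq m by simp
  qed
  obtain x y where n: "is_neck V.S V.L V.\<rho>L x y" using V.neckS by blast
  have n': "is_neck V.S V.L (\<rho>0 \<circ> inv_into A0 h) x y" using is_neck_cong[OF eq2 n] .
  have "is_neck A0 le0 \<rho>0 (inv_into A0 h x) (inv_into A0 h y)"
    using isoh_neck[OF k po0 V.botS'(1) V.botS'(2) V.topS'(1) V.topS'(2) n'] .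
  then show False using nn by blast
qed

lemma sum_props:
  assumes V: "vs A le B le' \<phi> \<rho>A \<rho>B" and finC: "finite C" and latC: "is_lattice C lc"
    and h0: "isoh h C lc (fst (vsum2 A le B le' \<phi>)) (snd (vsum2 A le B le' \<phi>))"
  shows "card (atoms C lc) = card (atoms A le) \<and> card (coatoms C lc) = card (coatoms B le')
     \<and> (\<exists>\<rho>. rank_fun C lc \<rho> \<and> \<rho> (ptop C lc) \<ge> 3) \<and> card C = card A + card B - 4"
proof -
  interpret V: vs A le B le' \<phi> \<rho>A \<rho>B by (rule V)
  have h: "isoh h C lc V.S V.L" using h0 V.S_eq by simp
  note b0 = pbot_props[OF finC latC] and t0 = ptop_props[OF finC latC]
  have b0': "pbot C lc \<in> C" "\<forall>x\<in>C. lc (pbot C lc) x" using b0 by auto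
  have t0': "ptop C lc \<in> C" "\<forall>x\<in>C. lc x (ptop C lc)" using t0 by auto
  have inj: "inj_on h C" using h unfolding isoh_def bij_betw_def by blast
  have sa: "atoms C lc \<subseteq> C" "coatoms C lc \<subseteq> C" unfolding atoms_def coatoms_def covers_def by auto
  have "atoms V.S V.L = h ` atoms C lc" using isoh_atoms[OF h V.poS b0'] .
  then have a: "card (atoms C lc) = card (atoms A le)"
    using card_image[OF inj_on_subset[OF inj sa(1)]] V.card_atomsS by simp
  have "coatoms V.S V.L = h ` coatoms C lc" using isoh_coatoms[OF h V.poS t0'] .
  then have c: "card (coatoms C lc) = card (coatoms B le')"
    using card_image[OF inj_on_subset[OF inj sa(2)]] V.card_coatomsS by simp
  have rk: "rank_fun C lc (V.\<rho>L \<circ> h)" using isoh_rank[OF h V.poS b0'(1) b0'(2) V.rankS] .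
  have "ptop V.S V.L = h (ptop C lc)" using isoh_ptop(2)[OF h V.poS t0'] .
  then have "(V.\<rho>L \<circ> h) (ptop C lc) = \<rho>B (ptop B le') + V.rA - 2" using V.rank_topS by simp
  then have "(V.\<rho>L \<circ> h) (ptop C lc) \<ge> 3" using V.rA3 V.rB3 by simp
  moreover have "card C = card A + card B - 4" using isoh_card[OF h] V.card_S by simp
  ultimately show ?thesis using a c rk by blast
qed

lemma iso_refl: "iso A le A le"
  unfolding iso_def by (rule exI[of _ id]) auto

lemma iso_sym: "iso A le B le' \<Longrightarrow> iso B le' A le"
  using isoh_inv iso_isoh by metis

lemma iso_trans: "iso A le B le' \<Longrightarrow> iso B le' C lc \<Longrightarrow> iso A le C lc"
  using isoh_comp iso_isoh by metis

definition cl :: "('a set \<times> ('a \<Rightarrow> 'a \<Rightarrow> bool)) set \<Rightarrow> ('a set \<times> ('a \<Rightarrow> 'a \<Rightarrow> bool)) \<Rightarrow> ('a set \<times> ('a \<Rightarrow> 'a \<Rightarrow> bool)) set" where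
  "cl S C = {D. D \<in> S \<and> iso (fst D) (snd D) (fst C) (snd C)}"

lemma num_classes_cl: "num_classes S = card (cl S ` S)"
proof -
  have "(\<lambda>(A, le). {(B, le'). (B, le') \<in> S \<and> iso B le' A le}) = cl S"
    unfolding cl_def by (auto simp: fun_eq_iff)
  then show ?thesis unfolding num_classes_def by simp
qed

lemma cl_self: "C \<in> S \<Longrightarrow> C \<in> cl S C" unfolding cl_def using iso_refl by blast

lemma cl_eq_iff: "C1 \<in> S \<Longrightarrow> C2 \<in> S \<Longrightarrow> cl S C1 = cl S C2 \<longleftrightarrow> iso (fst C1) (snd C1) (fst C2) (snd C2)"
proof
  assume "C1 \<in> S" "C2 \<in> S" "cl S C1 = cl S C2"
  then have "C1 \<in> cl S C2" using cl_self by blast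
  then show "iso (fst C1) (snd C1) (fst C2) (snd C2)" unfolding cl_def by blast
next
  assume i: "iso (fst C1) (snd C1) (fst C2) (snd C2)"
  show "cl S C1 = cl S C2" unfolding cl_def
    using iso_trans[OF _ i] iso_trans[OF _ iso_sym[OF i]] by blast
qed

definition pw :: "('a set \<times> ('a \<Rightarrow> 'a \<Rightarrow> bool)) set \<Rightarrow> bool" where
  "pw T \<longleftrightarrow> (\<forall>x\<in>T. \<forall>y\<in>T. iso (fst x) (snd x) (fst y) (snd y) \<longrightarrow> x = y)"

lemma fin_classes:
  fixes S :: "('a set \<times> ('a \<Rightarrow> 'a \<Rightarrow> bool)) set"
  assumes sub: "\<forall>C\<in>S. finite (fst C) \<and> card (fst C) = n"
  shows "finite (cl S ` S)"
proof -
  define U where "U = {..<n} \<times> {..<n}"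
  define \<Phi> where "\<Phi> (K :: ('a set \<times> ('a \<Rightarrow> 'a \<Rightarrow> bool)) set) = {R. R \<subseteq> U \<and> (\<exists>D\<in>K. iso (fst D) (snd D) {..<n} (\<lambda>x y. (x, y) \<in> R))}" for K
  have ne: "\<Phi> (cl S C) \<noteq> {}" if C: "C \<in> S" for C
  proof -
    obtain f where f: "bij_betw f (fst C) {0..<n}" using ex_bij_betw_finite_nat[of "fst C"] sub C by auto
    define R where "R = {(f x, f y) | x y. x \<in> fst C \<and> y \<in> fst C \<and> snd C x y}"
    have RU: "R \<subseteq> U" unfolding R_def U_def using f bij_betwE by fastforce
    have "isoh f (fst C) (snd C) {..<n} (\<lambda>x y. (x, y) \<in> R)"
      unfolding isoh_def
    proof (intro conjI ballI)
      show "bij_betw f (fst C) {..<n}" using f by (simp add: atLeast0LessThan)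
      fix x y assume xy: "x \<in> fst C" "y \<in> fst C"
      have inj: "inj_on f (fst C)" using f bij_betw_def by blast
      show "snd C x y \<longleftrightarrow> (f x, f y) \<in> R"
      proof
        assume "snd C x y" then show "(f x, f y) \<in> R" unfolding R_def using xy by blast
      next
        assume "(f x, f y) \<in> R"
        then obtain x' y' where e: "f x = f x'" "f y = f y'" "x' \<in> fst C" "y' \<in> fst C" "snd C x' y'"
          unfolding R_def by blast
        then have "x = x'" "y = y'" using inj xy inj_onD by metis+
        then show "snd C x y" using e by simp
      qed
    qed
    then have "iso (fst C) (snd C) {..<n} (\<lambda>x y. (x, y) \<in> R)" using iso_isoh by blast
    then have "R \<in> \<Phi> (cl S C)" unfolding \<Phi>_def using RU cl_self[OF C] by blast
    then show ?thesis by blast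
  qed
  have "inj_on \<Phi> (cl S ` S)"
  proof (rule inj_onI)
    fix K1 K2 assume K: "K1 \<in> cl S ` S" "K2 \<in> cl S ` S" "\<Phi> K1 = \<Phi> K2"
    then obtain C1 C2 where C: "C1 \<in> S" "C2 \<in> S" "K1 = cl S C1" "K2 = cl S C2" by blast
    then obtain R where "R \<in> \<Phi> K1" using ne by blast
    then have "R \<in> \<Phi> K2" using K by simp
    then obtain D1 D2 where D: "D1 \<in> K1" "D2 \<in> K2"
      "iso (fst D1) (snd D1) {..<n} (\<lambda>x y. (x, y) \<in> R)" "iso (fst D2) (snd D2) {..<n} (\<lambda>x y. (x, y) \<in> R)"
      using \<open>R \<in> \<Phi> K1\<close> unfolding \<Phi>_def by blast
    have "iso (fst D1) (snd D1) (fst C1) (snd C1)" "iso (fst D2) (snd D2) (fst C2) (snd C2)"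
      using D C unfolding cl_def by auto
    then have "iso (fst C1) (snd C1) (fst C2) (snd C2)"
      using iso_trans iso_sym D(3,4) by metis
    then show "K1 = K2" using cl_eq_iff C by blast
  qed
  moreover have "\<Phi> ` (cl S ` S) \<subseteq> Pow (Pow U)" unfolding \<Phi>_def by blast
  moreover have "finite (Pow (Pow U))" unfolding U_def by simp
  ultimately show ?thesis using finite_imageD finite_subset by metis
qed

lemma pw_le:
  assumes "T \<subseteq> S" "pw T" "finite (cl S ` S)"
  shows "card T \<le> num_classes S"
proof -
  have "inj_on (cl S) T"
  proof (rule inj_onI)
    fix x y assume "x \<in> T" "y \<in> T" "cl S x = cl S y"
    then have "iso (fst x) (snd x) (fst y) (snd y)" using cl_eq_iff assms(1) by blast
    then show "x = y" using assms(2) \<open>x \<in> T\<close> \<open>y \<in> T\<close> unfolding pw_def by blast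
  qed
  then have "card T = card (cl S ` T)" by (simp add: card_image)
  also have "\<dots> \<le> card (cl S ` S)" using card_mono[OF assms(3) image_mono[OF assms(1)]] .
  finally show ?thesis using num_classes_cl[of S] by simp
qed

lemma reps:
  fixes S :: "('a set \<times> ('a \<Rightarrow> 'a \<Rightarrow> bool)) set"
  assumes "finite (cl S ` S)"
  shows "\<exists>R. R \<subseteq> S \<and> pw R \<and> finite R \<and> card R = num_classes S"
proof -
  define rep where "rep (K :: ('a set \<times> ('a \<Rightarrow> 'a \<Rightarrow> bool)) set) = (SOME x. x \<in> K)" for K
  have rep: "rep (cl S C) \<in> cl S C" if "C \<in> S" for C
    unfolding rep_def using cl_self[OF that] by (metis someI_ex)
  define R where "R = rep ` (cl S ` S)"
  have RS: "R \<subseteq> S"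
  proof
    fix x assume "x \<in> R"
    then obtain C where C: "C \<in> S" "x = rep (cl S C)" unfolding R_def by blast
    then have "x \<in> cl S C" using rep by simp
    then show "x \<in> S" unfolding cl_def by blast
  qed
  have repcl: "cl S (rep (cl S C)) = cl S C" if C: "C \<in> S" for C
  proof -
    have "rep (cl S C) \<in> S" "iso (fst (rep (cl S C))) (snd (rep (cl S C))) (fst C) (snd C)"
      using rep[OF C] unfolding cl_def by auto
    then show ?thesis using cl_eq_iff C by blast
  qed
  have inj: "inj_on rep (cl S ` S)"
  proof (rule inj_onI)
    fix K1 K2 assume "K1 \<in> cl S ` S" "K2 \<in> cl S ` S" "rep K1 = rep K2"
    then obtain C1 C2 where C: "C1 \<in> S" "C2 \<in> S" "K1 = cl S C1" "K2 = cl S C2" "rep K1 = rep K2" by blast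
    have "cl S C1 = cl S (rep (cl S C1))" using repcl[OF C(1)] by simp
    also have "\<dots> = cl S (rep (cl S C2))" using C by simp
    also have "\<dots> = cl S C2" using repcl[OF C(2)] by simp
    finally show "K1 = K2" using C by simp
  qed
  have "pw R" unfolding pw_def
  proof (intro ballI impI)
    fix x y assume xy: "x \<in> R" "y \<in> R" "iso (fst x) (snd x) (fst y) (snd y)"
    then obtain C1 C2 where C: "C1 \<in> S" "C2 \<in> S" "x = rep (cl S C1)" "y = rep (cl S C2)" unfolding R_def by blast
    have "cl S x = cl S y" using cl_eq_iff RS xy by blast
    then have "cl S C1 = cl S C2" using repcl[OF C(1)] repcl[OF C(2)] C(3,4) by simp
    then show "x = y" using C by simp
  qed
  moreover have "card R = num_classes S" unfolding R_def using card_image[OF inj] num_classes_cl[of S] by simp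
  moreover have "finite R" unfolding R_def using assms by simp
  ultimately show ?thesis using RS by blast
qed

locale mctx =
  fixes F :: "(nat set \<times> (nat \<Rightarrow> nat \<Rightarrow> bool)) set"
  assumes members: "\<And>A le. (A, le) \<in> F \<Longrightarrow> finite A \<and> is_lattice A le \<and> graded A le \<and> vert_indec A le"
    and closed: "closed_vsum2 F"
begin

definition good :: "nat set \<times> (nat \<Rightarrow> nat \<Rightarrow> bool) \<Rightarrow> bool" where
  "good C \<longleftrightarrow> C \<in> F \<and> card (atoms (fst C) (snd C)) = 2 \<and> card (coatoms (fst C) (snd C)) = 2
     \<and> (\<exists>\<rho>. rank_fun (fst C) (snd C) \<rho> \<and> \<rho> (ptop (fst C) (snd C)) \<ge> 3)"

definition ispc :: "nat set \<times> (nat \<Rightarrow> nat \<Rightarrow> bool) \<Rightarrow> bool" where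
  "ispc C \<longleftrightarrow> C \<in> F \<and> is_piece (fst C) (snd C)"

definition Fn :: "nat \<Rightarrow> (nat set \<times> (nat \<Rightarrow> nat \<Rightarrow> bool)) set" where
  "Fn n = {C. C \<in> F \<and> card (fst C) = n}"
definition Pn :: "nat \<Rightarrow> (nat set \<times> (nat \<Rightarrow> nat \<Rightarrow> bool)) set" where
  "Pn n = {C. C \<in> F \<and> card (fst C) = n \<and> is_piece (fst C) (snd C)}"

lemma fvi_eq: "f_vi F n = num_classes (Fn n)"
proof -
  have "{(A, le). (A, le) \<in> F \<and> card A = n} = Fn n" unfolding Fn_def by auto
  then show ?thesis unfolding f_vi_def by simp
qed

lemma fpc_eq: "f_pc F n = num_classes (Pn n)"
proof -
  have "{(A, le). (A, le) \<in> F \<and> card A = n \<and> is_piece A le} = Pn n" unfolding Pn_def by auto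
  then show ?thesis unfolding f_pc_def by simp
qed

lemma mem: "C \<in> F \<Longrightarrow> finite (fst C) \<and> is_lattice (fst C) (snd C)"
  using members[of "fst C" "snd C"] by simp

lemma finFn: "finite (cl (Fn n) ` Fn n)"
  by (rule fin_classes[where n=n]) (auto simp: Fn_def mem)
lemma finPn: "finite (cl (Pn n) ` Pn n)"
  by (rule fin_classes[where n=n]) (auto simp: Pn_def mem)

definition \<rho>P :: "nat set \<times> (nat \<Rightarrow> nat \<Rightarrow> bool) \<Rightarrow> nat \<Rightarrow> nat" where
  "\<rho>P C = (SOME \<rho>. rank_fun (fst C) (snd C) \<rho> \<and> \<rho> (ptop (fst C) (snd C)) \<ge> 3
      \<and> \<not> (\<exists>a b. is_neck (fst C) (snd C) \<rho> a b))"
definition \<rho>X :: "nat set \<times> (nat \<Rightarrow> nat \<Rightarrow> bool) \<Rightarrow> nat \<Rightarrow> nat" where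
  "\<rho>X C = (SOME \<rho>. rank_fun (fst C) (snd C) \<rho> \<and> \<rho> (ptop (fst C) (snd C)) \<ge> 3)"

lemma \<rho>P: "ispc C \<Longrightarrow> rank_fun (fst C) (snd C) (\<rho>P C) \<and> \<rho>P C (ptop (fst C) (snd C)) \<ge> 3
      \<and> \<not> (\<exists>a b. is_neck (fst C) (snd C) (\<rho>P C) a b)"
proof -
  assume "ispc C"
  then have ex: "\<exists>\<rho>. rank_fun (fst C) (snd C) \<rho> \<and> \<rho> (ptop (fst C) (snd C)) \<ge> 3
      \<and> \<not> (\<exists>a b. is_neck (fst C) (snd C) \<rho> a b)" unfolding ispc_def is_piece_def by blast
  show ?thesis unfolding \<rho>P_def using someI_ex[OF ex] .
qed

lemma \<rho>X: "good C \<Longrightarrow> rank_fun (fst C) (snd C) (\<rho>X C) \<and> \<rho>X C (ptop (fst C) (snd C)) \<ge> 3"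
proof -
  assume "good C"
  then have ex: "\<exists>\<rho>. rank_fun (fst C) (snd C) \<rho> \<and> \<rho> (ptop (fst C) (snd C)) \<ge> 3"
    unfolding good_def by blast
  show ?thesis unfolding \<rho>X_def using someI_ex[OF ex] .
qed

lemma pc_good: "ispc C \<Longrightarrow> good C"
  unfolding ispc_def good_def is_piece_def by blast

definition phi :: "nat set \<times> (nat \<Rightarrow> nat \<Rightarrow> bool) \<Rightarrow> nat set \<times> (nat \<Rightarrow> nat \<Rightarrow> bool) \<Rightarrow> nat \<Rightarrow> nat" where
  "phi P X = (SOME \<phi>. bij_betw \<phi> (coatoms (fst P) (snd P)) (atoms (fst X) (snd X)))"

lemma phi: "good P \<Longrightarrow> good X \<Longrightarrow> bij_betw (phi P X) (coatoms (fst P) (snd P)) (atoms (fst X) (snd X))"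
proof -
  assume "good P" "good X"
  then have c: "card (coatoms (fst P) (snd P)) = 2" "card (atoms (fst X) (snd X)) = 2" unfolding good_def by auto
  then have "finite (coatoms (fst P) (snd P))" "finite (atoms (fst X) (snd X))"
    using card_ge_0_finite[of "coatoms (fst P) (snd P)"] card_ge_0_finite[of "atoms (fst X) (snd X)"] by simp_all
  then have "\<exists>\<phi>. bij_betw \<phi> (coatoms (fst P) (snd P)) (atoms (fst X) (snd X))"
    using finite_same_card_bij[of "coatoms (fst P) (snd P)" "atoms (fst X) (snd X)"] c by simp
  then show ?thesis unfolding phi_def by (rule someI_ex)
qed

lemma vs_inst: "ispc P \<Longrightarrow> good X \<Longrightarrow> vs (fst P) (snd P) (fst X) (snd X) (phi P X) (\<rho>P P) (\<rho>X X)"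
proof -
  assume P: "ispc P" and X: "good X"
  have gP: "good P" using pc_good[OF P] .
  show ?thesis
  proof
    show "finite (fst P)" "is_lattice (fst P) (snd P)" using mem P unfolding ispc_def by auto
    show "finite (fst X)" "is_lattice (fst X) (snd X)" using mem X unfolding good_def by auto
    show "rank_fun (fst P) (snd P) (\<rho>P P)" "3 \<le> \<rho>P P (ptop (fst P) (snd P))" using \<rho>P[OF P] by auto
    show "rank_fun (fst X) (snd X) (\<rho>X X)" "3 \<le> \<rho>X X (ptop (fst X) (snd X))" using \<rho>X[OF X] by auto
    show "card (coatoms (fst P) (snd P)) = 2" "card (atoms (fst X) (snd X)) = 2" using gP X unfolding good_def by auto
    show "bij_betw (phi P X) (coatoms (fst P) (snd P)) (atoms (fst X) (snd X))" using phi[OF gP X] .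
  qed
qed

definition sm :: "nat set \<times> (nat \<Rightarrow> nat \<Rightarrow> bool) \<Rightarrow> nat set \<times> (nat \<Rightarrow> nat \<Rightarrow> bool) \<Rightarrow> (nat + nat) set \<times> ((nat + nat) \<Rightarrow> (nat + nat) \<Rightarrow> bool)" where
  "sm P X = vsum2 (fst P) (snd P) (fst X) (snd X) (phi P X)"

definition rep :: "nat set \<times> (nat \<Rightarrow> nat \<Rightarrow> bool) \<Rightarrow> nat set \<times> (nat \<Rightarrow> nat \<Rightarrow> bool) \<Rightarrow> nat set \<times> (nat \<Rightarrow> nat \<Rightarrow> bool)" where
  "rep P X = (SOME C. C \<in> F \<and> iso (fst C) (snd C) (fst (sm P X)) (snd (sm P X)))"

lemma rep_ex: "ispc P \<Longrightarrow> good X \<Longrightarrow> rep P X \<in> F \<and> iso (fst (rep P X)) (snd (rep P X)) (fst (sm P X)) (snd (sm P X))"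
proof -
  assume P: "ispc P" and X: "good X"
  have gP: "good P" using pc_good[OF P] .
  have inF: "(fst P, snd P) \<in> F" "(fst X, snd X) \<in> F" using P X unfolding ispc_def good_def by auto
  have c: "card (coatoms (fst P) (snd P)) = 2" "card (atoms (fst X) (snd X)) = 2" using gP X unfolding good_def by auto
  have "\<exists>C lc. (C, lc) \<in> F \<and> iso C lc (fst (sm P X)) (snd (sm P X))"
    using closed inF c phi[OF gP X] unfolding closed_vsum2_def sm_def by blast
  then have "\<exists>C. C \<in> F \<and> iso (fst C) (snd C) (fst (sm P X)) (snd (sm P X))" by auto
  then show ?thesis unfolding rep_def by (rule someI_ex)
qed

lemma rep_ok:
  assumes P: "ispc P" and X: "good X"
  shows "good (rep P X) \<and> card (fst (rep P X)) = card (fst P) + card (fst X) - 4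
     \<and> \<not> is_piece (fst (rep P X)) (snd (rep P X))"
proof -
  note V = vs_inst[OF P X]
  obtain inF: "rep P X \<in> F" and i: "iso (fst (rep P X)) (snd (rep P X)) (fst (sm P X)) (snd (sm P X))"
    using rep_ex[OF P X] by blast
  obtain h where h: "isoh h (fst (rep P X)) (snd (rep P X)) (fst (sm P X)) (snd (sm P X))"
    using i iso_isoh by blast
  have mm: "finite (fst (rep P X))" "is_lattice (fst (rep P X)) (snd (rep P X))" using mem inF by auto
  have sp: "card (atoms (fst (rep P X)) (snd (rep P X))) = card (atoms (fst P) (snd P)) \<and>
      card (coatoms (fst (rep P X)) (snd (rep P X))) = card (coatoms (fst X) (snd X)) \<and>
      (\<exists>\<rho>. rank_fun (fst (rep P X)) (snd (rep P X)) \<rho> \<and> \<rho> (ptop (fst (rep P X)) (snd (rep P X))) \<ge> 3) \<and>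
      card (fst (rep P X)) = card (fst P) + card (fst X) - 4"
    using sum_props[OF V mm(1) mm(2)] h unfolding sm_def by blast
  have "good (rep P X)" unfolding good_def using sp inF pc_good[OF P] X unfolding good_def by auto
  moreover have "\<not> is_piece (fst (rep P X)) (snd (rep P X))"
  proof
    assume "is_piece (fst (rep P X)) (snd (rep P X))"
    then show False using piece_not_sum[OF V mm(1)] h unfolding sm_def by blast
  qed
  ultimately show ?thesis using sp by blast
qed

lemma rep_inj:
  assumes P1: "ispc P1" and X1: "good X1" and P2: "ispc P2" and X2: "good X2"
    and i: "iso (fst (rep P1 X1)) (snd (rep P1 X1)) (fst (rep P2 X2)) (snd (rep P2 X2))"
  shows "iso (fst P1) (snd P1) (fst P2) (snd P2) \<and> iso (fst X1) (snd X1) (fst X2) (snd X2)"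
proof -
  have i1: "iso (fst (rep P1 X1)) (snd (rep P1 X1)) (fst (sm P1 X1)) (snd (sm P1 X1))" using rep_ex[OF P1 X1] by blast
  have i2: "iso (fst (rep P2 X2)) (snd (rep P2 X2)) (fst (sm P2 X2)) (snd (sm P2 X2))" using rep_ex[OF P2 X2] by blast
  have "iso (fst (sm P1 X1)) (snd (sm P1 X1)) (fst (sm P2 X2)) (snd (sm P2 X2))"
    using iso_trans[OF iso_trans[OF iso_sym[OF i1] i] i2] .
  then obtain h where h: "isoh h (fst (sm P1 X1)) (snd (sm P1 X1)) (fst (sm P2 X2)) (snd (sm P2 X2))"
    using iso_isoh by blast
  show ?thesis
    using sum_inj[OF vs_inst[OF P1 X1] vs_inst[OF P2 X2] conjunct2[OF conjunct2[OF \<rho>P[OF P1]]]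
        conjunct2[OF conjunct2[OF \<rho>P[OF P2]]]] h unfolding sm_def by blast
qed

end

context mctx begin

definition Rp :: "nat \<Rightarrow> (nat set \<times> (nat \<Rightarrow> nat \<Rightarrow> bool)) set" where
  "Rp k = (SOME R. R \<subseteq> Pn k \<and> pw R \<and> finite R \<and> card R = num_classes (Pn k))"

lemma Rp: "Rp k \<subseteq> Pn k \<and> pw (Rp k) \<and> finite (Rp k) \<and> card (Rp k) = f_pc F k"
proof -
  have ex: "\<exists>R. R \<subseteq> Pn k \<and> pw R \<and> finite R \<and> card R = num_classes (Pn k)" using reps[OF finPn] .
  show ?thesis unfolding Rp_def fpc_eq using someI_ex[OF ex] .
qed

lemma Rp_pc: "P \<in> Rp k \<Longrightarrow> ispc P \<and> card (fst P) = k"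
  using Rp unfolding Pn_def ispc_def by blast

lemma Pn_Fn: "Pn k \<subseteq> Fn k" unfolding Pn_def Fn_def by blast

definition Qp :: "nat \<Rightarrow> nat \<Rightarrow> (nat set \<times> (nat \<Rightarrow> nat \<Rightarrow> bool)) set \<Rightarrow> bool" where
  "Qp N n T \<longleftrightarrow> finite T \<and> T \<subseteq> Fn n \<and> (\<forall>x\<in>T. good x) \<and> pw T \<and> lowf (f_pc F) N n \<le> card T"

lemma step:
  assumes N: "N \<ge> 6" and n: "n > 6" and IH: "\<forall>m<n. Qp N m (Tf m)"
  shows "\<exists>T. Qp N n T"
proof -
  define K where "K = {6..min (n - 1) N}"
  define Sg where "Sg k = (\<lambda>(P, X). rep P X) ` (Rp k \<times> Tf (n - k + 4))" for k
  define T0 where "T0 = (if n \<le> N then Rp n else {})"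
  define T where "T = T0 \<union> (\<Union>k\<in>K. Sg k)"
  have Kb: "k \<in> K \<Longrightarrow> 6 \<le> k \<and> k \<le> n - 1 \<and> k \<le> N \<and> n - k + 4 < n" for k unfolding K_def using n by auto
  have Tf: "k \<in> K \<Longrightarrow> Qp N (n - k + 4) (Tf (n - k + 4))" for k using IH Kb by blast
  have TfX: "k \<in> K \<Longrightarrow> X \<in> Tf (n - k + 4) \<Longrightarrow> good X \<and> card (fst X) = n - k + 4" for k X
    using Tf[of k] unfolding Qp_def Fn_def by blast
  have Sgm: "k \<in> K \<Longrightarrow> C \<in> Sg k \<Longrightarrow> \<exists>P X. P \<in> Rp k \<and> X \<in> Tf (n - k + 4) \<and> C = rep P X" for k C
    unfolding Sg_def by auto
  have SgOK: "k \<in> K \<Longrightarrow> C \<in> Sg k \<Longrightarrow> good C \<and> card (fst C) = n \<and> \<not> is_piece (fst C) (snd C)" for k C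
  proof -
    assume k: "k \<in> K" and C: "C \<in> Sg k"
    obtain P X where PX: "P \<in> Rp k" "X \<in> Tf (n - k + 4)" "C = rep P X" using Sgm[OF k C] by blast
    have P: "ispc P" "card (fst P) = k" using Rp_pc[OF PX(1)] by auto
    have X: "good X" "card (fst X) = n - k + 4" using TfX[OF k PX(2)] by auto
    have "card (fst C) = k + (n - k + 4) - 4" using rep_ok[OF P(1) X(1)] PX(3) P(2) X(2) by simp
    also have "\<dots> = n" using Kb[OF k] by linarith
    finally show ?thesis using rep_ok[OF P(1) X(1)] PX(3) by simp
  qed
  have finSg: "k \<in> K \<Longrightarrow> finite (Sg k)" for k
    unfolding Sg_def using Rp Tf unfolding Qp_def by blast
  have injSg: "k \<in> K \<Longrightarrow> inj_on (\<lambda>(P, X). rep P X) (Rp k \<times> Tf (n - k + 4))" for k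
  proof (rule inj_onI)
    fix k and a b assume k: "k \<in> K" and a: "a \<in> Rp k \<times> Tf (n - k + 4)" and b: "b \<in> Rp k \<times> Tf (n - k + 4)"
      and e: "(\<lambda>(P, X). rep P X) a = (\<lambda>(P, X). rep P X) b"
    obtain P1 X1 P2 X2 where ab: "a = (P1, X1)" "b = (P2, X2)" by (cases a, cases b) auto
    have m: "P1 \<in> Rp k" "X1 \<in> Tf (n - k + 4)" "P2 \<in> Rp k" "X2 \<in> Tf (n - k + 4)" using a b ab by auto
    have pc: "ispc P1" "ispc P2" using Rp_pc m by blast+
    have gd: "good X1" "good X2" using TfX[OF k] m by blast+
    have "rep P1 X1 = rep P2 X2" using e ab by simp
    then have "iso (fst (rep P1 X1)) (snd (rep P1 X1)) (fst (rep P2 X2)) (snd (rep P2 X2))" using iso_refl by simp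
    then have ii: "iso (fst P1) (snd P1) (fst P2) (snd P2)" "iso (fst X1) (snd X1) (fst X2) (snd X2)"
      using rep_inj[OF pc(1) gd(1) pc(2) gd(2)] by blast+
    have "P1 = P2" using ii(1) Rp m unfolding pw_def by blast
    moreover have "X1 = X2" using ii(2) Tf[OF k] m unfolding Qp_def pw_def by blast
    ultimately show "a = b" using ab by simp
  qed
  have cardSg: "k \<in> K \<Longrightarrow> card (Sg k) = f_pc F k * card (Tf (n - k + 4))" for k
  proof -
    assume k: "k \<in> K"
    have "card (Sg k) = card (Rp k \<times> Tf (n - k + 4))" unfolding Sg_def using card_image[OF injSg[OF k]] .
    also have "\<dots> = card (Rp k) * card (Tf (n - k + 4))" by (rule card_cartesian_product)
    finally show ?thesis using Rp[of k] by simp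
  qed
  have isoK: "k1 \<in> K \<Longrightarrow> k2 \<in> K \<Longrightarrow> C1 \<in> Sg k1 \<Longrightarrow> C2 \<in> Sg k2 \<Longrightarrow>
      iso (fst C1) (snd C1) (fst C2) (snd C2) \<Longrightarrow> C1 = C2" for k1 k2 C1 C2
  proof -
    assume k: "k1 \<in> K" "k2 \<in> K" and C: "C1 \<in> Sg k1" "C2 \<in> Sg k2" and i: "iso (fst C1) (snd C1) (fst C2) (snd C2)"
    obtain P1 X1 where PX1: "P1 \<in> Rp k1" "X1 \<in> Tf (n - k1 + 4)" "C1 = rep P1 X1" using Sgm[OF k(1) C(1)] by blast
    obtain P2 X2 where PX2: "P2 \<in> Rp k2" "X2 \<in> Tf (n - k2 + 4)" "C2 = rep P2 X2" using Sgm[OF k(2) C(2)] by blast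
    have P1: "ispc P1" "card (fst P1) = k1" using Rp_pc[OF PX1(1)] by auto
    have P2: "ispc P2" "card (fst P2) = k2" using Rp_pc[OF PX2(1)] by auto
    have g1: "good X1" using TfX[OF k(1) PX1(2)] by blast
    have g2: "good X2" using TfX[OF k(2) PX2(2)] by blast
    have ii: "iso (fst P1) (snd P1) (fst P2) (snd P2)" "iso (fst X1) (snd X1) (fst X2) (snd X2)"
      using rep_inj[OF P1(1) g1 P2(1) g2] i PX1(3) PX2(3) by blast+
    have "card (fst P1) = card (fst P2)" using ii(1) iso_isoh isoh_card by metis
    then have kk: "k1 = k2" using P1 P2 by simp
    have "P1 = P2" using ii(1) Rp PX1(1) PX2(1) kk unfolding pw_def by blast
    moreover have "X1 = X2" using ii(2) Tf[OF k(1)] PX1(2) PX2(2) kk unfolding Qp_def pw_def by blast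
    ultimately show "C1 = C2" using PX1 PX2 by simp
  qed
  have disj: "\<forall>i\<in>K. \<forall>j\<in>K. i \<noteq> j \<longrightarrow> Sg i \<inter> Sg j = {}"
  proof (intro ballI impI)
    fix i j assume ij: "i \<in> K" "j \<in> K" "i \<noteq> j"
    show "Sg i \<inter> Sg j = {}"
    proof (rule ccontr)
      assume "Sg i \<inter> Sg j \<noteq> {}"
      then obtain C where C: "C \<in> Sg i" "C \<in> Sg j" by blast
      obtain P1 X1 where PX1: "P1 \<in> Rp i" "X1 \<in> Tf (n - i + 4)" "C = rep P1 X1" using Sgm[OF ij(1) C(1)] by blast
      obtain P2 X2 where PX2: "P2 \<in> Rp j" "X2 \<in> Tf (n - j + 4)" "C = rep P2 X2" using Sgm[OF ij(2) C(2)] by blast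
      have P1: "ispc P1" "card (fst P1) = i" using Rp_pc[OF PX1(1)] by auto
      have P2: "ispc P2" "card (fst P2) = j" using Rp_pc[OF PX2(1)] by auto
      have g1: "good X1" using TfX[OF ij(1) PX1(2)] by blast
      have g2: "good X2" using TfX[OF ij(2) PX2(2)] by blast
      have "iso (fst (rep P1 X1)) (snd (rep P1 X1)) (fst (rep P2 X2)) (snd (rep P2 X2))"
        using iso_refl PX1(3) PX2(3) by metis
      then have "iso (fst P1) (snd P1) (fst P2) (snd P2)" using rep_inj[OF P1(1) g1 P2(1) g2] by blast
      then have "card (fst P1) = card (fst P2)" using iso_isoh isoh_card by metis
      then show False using P1 P2 ij by simp
    qed
  qed
  have T0p: "T0 \<subseteq> Rp n" "finite T0" "pw T0" unfolding T0_def using Rp[of n] by (auto simp: pw_def)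
  have T0pc: "x \<in> T0 \<Longrightarrow> ispc x \<and> card (fst x) = n" for x using T0p Rp_pc by blast
  have UN: "card (\<Union>k\<in>K. Sg k) = (\<Sum>k\<in>K. card (Sg k))"
    using card_UN_disjoint[of K Sg] finSg disj unfolding K_def by simp
  have dj0: "T0 \<inter> (\<Union>k\<in>K. Sg k) = {}"
  proof (rule ccontr)
    assume "T0 \<inter> (\<Union>k\<in>K. Sg k) \<noteq> {}"
    then obtain x k where x: "x \<in> T0" "k \<in> K" "x \<in> Sg k" by blast
    then show False using T0pc[OF x(1)] SgOK[OF x(2,3)] unfolding ispc_def by blast
  qed
  have finU: "finite (\<Union>k\<in>K. Sg k)" using finSg unfolding K_def by blast
  have cardT: "card T = card T0 + (\<Sum>k\<in>K. f_pc F k * card (Tf (n - k + 4)))"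
    unfolding T_def using card_Un_disjoint[OF T0p(2) finU dj0] UN cardSg by simp
  have "Qp N n T" unfolding Qp_def
  proof (intro conjI)
    show "finite T" unfolding T_def using T0p(2) finU by blast
    show "T \<subseteq> Fn n"
    proof
      fix x assume "x \<in> T"
      then consider "x \<in> T0" | k where "k \<in> K" "x \<in> Sg k" unfolding T_def by blast
      then show "x \<in> Fn n"
      proof cases
        case 1 then show ?thesis using T0pc unfolding Fn_def ispc_def by blast
      next
        case 2 then show ?thesis using SgOK unfolding Fn_def good_def by blast
      qed
    qed
    show "\<forall>x\<in>T. good x"
    proof
      fix x assume "x \<in> T"
      then consider "x \<in> T0" | k where "k \<in> K" "x \<in> Sg k" unfolding T_def by blast
      then show "good x"
      proof cases
        case 1 then show ?thesis using T0pc pc_good by blast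
      next
        case 2 then show ?thesis using SgOK by blast
      qed
    qed
    show "pw T" unfolding pw_def
    proof (intro ballI impI)
      fix x y assume x: "x \<in> T" and y: "y \<in> T" and i: "iso (fst x) (snd x) (fst y) (snd y)"
      have pcase: "False" if a: "a \<in> T0" and k: "k \<in> K" and b: "b \<in> Sg k"
          and ab: "iso (fst a) (snd a) (fst b) (snd b)" for a b k
      proof -
        obtain P X where PX: "P \<in> Rp k" "X \<in> Tf (n - k + 4)" "b = rep P X" using Sgm[OF k b] by blast
        have P: "ispc P" using Rp_pc[OF PX(1)] by blast
        have X: "good X" using TfX[OF k PX(2)] by blast
        have "iso (fst b) (snd b) (fst (sm P X)) (snd (sm P X))" using rep_ex[OF P X] PX(3) by blast
        then have "iso (fst a) (snd a) (fst (sm P X)) (snd (sm P X))" using iso_trans[OF ab] by blast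
        then obtain h where h: "isoh h (fst a) (snd a) (fst (sm P X)) (snd (sm P X))" using iso_isoh by blast
        have "ispc a" using T0pc[OF a] by blast
        then have "finite (fst a)" "is_piece (fst a) (snd a)" using mem unfolding ispc_def by auto
        then show False using piece_not_sum[OF vs_inst[OF P X]] h unfolding sm_def by blast
      qed
      from x consider "x \<in> T0" | k where "k \<in> K" "x \<in> Sg k" unfolding T_def by blast
      then show "x = y"
      proof cases
        case 1
        from y consider "y \<in> T0" | k where "k \<in> K" "y \<in> Sg k" unfolding T_def by blast
        then show ?thesis
        proof cases
          case 1 then show ?thesis using \<open>x \<in> T0\<close> T0p(3) i unfolding pw_def by blast
        next
          case 2 then show ?thesis using pcase[OF \<open>x \<in> T0\<close> _ _ i] by blast
        qed
      next
        case 2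
        from y consider "y \<in> T0" | k' where "k' \<in> K" "y \<in> Sg k'" unfolding T_def by blast
        then show ?thesis
        proof cases
          case 1 then show ?thesis using pcase[OF \<open>y \<in> T0\<close> 2 iso_sym[OF i]] by blast
        next
          case 3: 2 then show ?thesis using isoK[OF 2(1) 3(1) 2(2) 3(2) i] by blast
        qed
      qed
    qed
    show "lowf (f_pc F) N n \<le> card T"
    proof -
      have mono: "(\<Sum>k\<in>K. f_pc F k * lowf (f_pc F) N (n - k + 4)) \<le> (\<Sum>k\<in>K. f_pc F k * card (Tf (n - k + 4)))"
      proof (rule sum_mono)
        fix k assume k: "k \<in> K"
        have "lowf (f_pc F) N (n - k + 4) \<le> card (Tf (n - k + 4))" using Tf[OF k] unfolding Qp_def by blast
        then show "f_pc F k * lowf (f_pc F) N (n - k + 4) \<le> f_pc F k * card (Tf (n - k + 4))" by simp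
      qed
      have lw: "lowf (f_pc F) N n = (if n \<le> N then f_pc F n else 0) + (\<Sum>k\<in>K. f_pc F k * lowf (f_pc F) N (n - k + 4))"
      proof (cases "n \<le> N")
        case True
        have "K = {6..n - 1}" unfolding K_def using True by simp
        then show ?thesis using True n by (subst lowf.simps) simp
      next
        case False
        have "K = {6..N}" unfolding K_def using False by simp
        then show ?thesis using False n by (subst lowf.simps) simp
      qed
      have "card T0 = (if n \<le> N then f_pc F n else 0)" unfolding T0_def using Rp by simp
      then show ?thesis using lw mono cardT by simp
    qed
  qed
  then show ?thesis by blast
qed

lemma all_Q:
  assumes N: "N \<ge> 6"
  shows "\<exists>T. Qp N n T"
proof (induction n rule: less_induct)
  case (less n)
  show ?case
  proof (cases "n \<le> 6")
    case True
    have "Qp N n (Rp n)" unfolding Qp_def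
    proof (intro conjI)
      show "finite (Rp n)" "pw (Rp n)" using Rp by auto
      show "Rp n \<subseteq> Fn n" using Rp Pn_Fn by blast
      show "\<forall>x\<in>Rp n. good x" using Rp_pc pc_good by blast
      show "lowf (f_pc F) N n \<le> card (Rp n)" using Rp True by (subst lowf.simps) simp
    qed
    then show ?thesis by blast
  next
    case False
    have "\<forall>m\<in>{..<n}. \<exists>T. Qp N m T" using less by blast
    then obtain Tf where "\<forall>m\<in>{..<n}. Qp N m (Tf m)" using bchoice by blast
    then have "\<forall>m<n. Qp N m (Tf m)" by blast
    then show ?thesis using step[OF N] False by simp
  qed
qed

lemma final:
  assumes N: "N \<ge> 6"
  shows "f_vi F n \<ge> lowf (f_pc F) N n"
proof -
  obtain T where T: "Qp N n T" using all_Q[OF N] by blast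
  then have "card T \<le> f_vi F n" unfolding fvi_eq Qp_def using pw_le finFn by blast
  then show ?thesis using T unfolding Qp_def by simp
qed

end

theorem theorem3p7:
  fixes F :: "(nat set \<times> (nat \<Rightarrow> nat \<Rightarrow> bool)) set" and N :: nat
  assumes members: "\<And>A le. (A, le) \<in> F \<Longrightarrow>
            finite A \<and> is_lattice A le \<and> graded A le \<and> vert_indec A le"
    and closed: "closed_vsum2 F"
    and N: "N \<ge> 6"
  shows "\<forall>n \<ge> 1. f_vi F n \<ge> lowf (f_pc F) N n"
proof -
  interpret mctx F using members closed by unfold_locales auto
  show ?thesis using final[OF N] by blast
qed

end
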